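(* For every extended directed co-graph $G=(V,E)$ which is given by a binary ex-di-co-tree, the directed path-width $\mathrm{dpw}(G)$ and the directed tree-width $\mathrm{dtw}(G)$ can be computed in time $O(|V|)$.
   Context: Digraphs are finite, without loops or multiple arcs. For vertex-disjoint digraphs $G_1,\ldots,G_k$: the series composition $\otimes$ is their disjoint union plus all arcs in both directions between vertices of different $G_i$; a directed union $\ominus$ is any digraph obtained from their disjoint union by adding some (possibly none or all) arcs from vertices of $G_i$ to vertices of $G_j$ with $i<j$. Extended directed co-graphs: single-vertex digraphs, and closure under directed union and series composition. An ex-di-co-tree for $G$ is a rooted tree whose leaves correspond to the vertices of $G$ and whose inner nodes correspond to directed union or series composition operations applied to the digraphs defined by the child subtrees (in order), so that the root yields $G$; it is binary if every inner node has exactly two children. Directed path-width: a directed path-decomposition of $G=(V,E)$ is a sequence $(X_1,\ldots,X_r)$ of subsets of $V$ with $\bigcup X_i=V$, for each arc $(u,v)$ some $i\le j$ with $u\in X_i,v\in X_j$, and for each vertex the bags containing it having consecutive indices; width $\max|X_i|-1$; $\mathrm{dpw}(G)$ is the minimum width. Directed tree-width: for $Z\subseteq V$, $S\subseteq V$ is $Z$-normal if no directed walk in $G-Z$ with first and last vertex in $S$ uses a vertex of $G-(Z\cup S)$. A directed tree-decomposition is $(T,\mathcal{X},\mathcal{W})$ with $T=(V_T,E_T)$ an out-tree (rooted, arcs directed away from root; $u\le v$ means a directed path of $\ge0$ arcs from $u$ to $v$), $\mathcal{X}=\{X_e:e\in E_T\}$, $\mathcal{W}=\{W_r:r\in V_T\}$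 subsets of $V$, such that $\mathcal{W}$ partitions $V$ into nonempty sets and for each $(u,v)\in E_T$ the set $\bigcup\{W_r: v\le r\}$ is $X_{(u,v)}$-normal; width $\max_r|W_r\cup\bigcup_{e\sim r}X_e|-1$ ($e\sim r$: $r$ is an end of $e$); $\mathrm{dtw}(G)$ is the minimum width. *)

theory Defs
  imports Main
begin

definition digraph :: "'a set \<Rightarrow> ('a \<times> 'a) set \<Rightarrow> bool" where
  "digraph V E \<longleftrightarrow> finite V \<and> E \<subseteq> V \<times> V \<and> (\<forall>v. (v, v) \<notin> E)"

datatype 'a exdico_tree =
    Leaf 'a
  | DUnion "'a exdico_tree" "'a exdico_tree"
  | Series "'a exdico_tree" "'a exdico_tree"

inductive is_exdico_tree :: "'a exdico_tree \<Rightarrow> 'a set \<Rightarrow> ('a \<times> 'a) set \<Rightarrow> bool" where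
  leaf: "is_exdico_tree (Leaf v) {v} {}"
| dunion: "\<lbrakk> is_exdico_tree t1 V1 E1; is_exdico_tree t2 V2 E2; V1 \<inter> V2 = {};
            E1 \<union> E2 \<subseteq> E; E \<subseteq> E1 \<union> E2 \<union> (V1 \<times> V2) \<rbrakk>
           \<Longrightarrow> is_exdico_tree (DUnion t1 t2) (V1 \<union> V2) E"
| series: "\<lbrakk> is_exdico_tree t1 V1 E1; is_exdico_tree t2 V2 E2; V1 \<inter> V2 = {} \<rbrakk>
           \<Longrightarrow> is_exdico_tree (Series t1 t2) (V1 \<union> V2) (E1 \<union> E2 \<union> (V1 \<times> V2) \<union> (V2 \<times> V1))"

definition is_dpd :: "'a set \<Rightarrow> ('a \<times> 'a) set \<Rightarrow> 'a set list \<Rightarrow> bool" where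
  "is_dpd V E Xs \<longleftrightarrow>
     Xs \<noteq> [] \<and> (\<forall>X\<in>set Xs. X \<subseteq> V) \<and> \<Union>(set Xs) = V \<and>
     (\<forall>(u, v)\<in>E. \<exists>i j. i \<le> j \<and> j < length Xs \<and> u \<in> Xs ! i \<and> v \<in> Xs ! j) \<and>
     (\<forall>v i j k. i \<le> j \<and> j \<le> k \<and> k < length Xs \<and> v \<in> Xs ! i \<and> v \<in> Xs ! k \<longrightarrow> v \<in> Xs ! j)"

definition dpd_width :: "'a set list \<Rightarrow> nat" where
  "dpd_width Xs = Max (card ` set Xs) - 1"

definition dpw :: "'a set \<Rightarrow> ('a \<times> 'a) set \<Rightarrow> nat" where
  "dpw V E = (LEAST k. \<exists>Xs. is_dpd V E Xs \<and> dpd_width Xs = k)"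

definition walk_avoiding :: "'a set \<Rightarrow> ('a \<times> 'a) set \<Rightarrow> 'a set \<Rightarrow> 'a list \<Rightarrow> bool" where
  "walk_avoiding V E Z p \<longleftrightarrow> p \<noteq> [] \<and> set p \<subseteq> V - Z \<and>
     (\<forall>i. Suc i < length p \<longrightarrow> (p ! i, p ! Suc i) \<in> E)"

definition z_normal :: "'a set \<Rightarrow> ('a \<times> 'a) set \<Rightarrow> 'a set \<Rightarrow> 'a set \<Rightarrow> bool" where
  "z_normal V E Z S \<longleftrightarrow>
     \<not> (\<exists>p. walk_avoiding V E Z p \<and> hd p \<in> S \<and> last p \<in> S \<and> (\<exists>w\<in>set p. w \<notin> Z \<union> S))"

definition out_tree :: "nat set \<Rightarrow> (nat \<times> nat) set \<Rightarrow> nat \<Rightarrow> bool" where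
  "out_tree VT ET r0 \<longleftrightarrow> finite VT \<and> r0 \<in> VT \<and> ET \<subseteq> VT \<times> VT \<and>
     (\<forall>u. (u, r0) \<notin> ET) \<and>
     (\<forall>v\<in>VT - {r0}. \<exists>!u. (u, v) \<in> ET) \<and>
     (\<forall>v\<in>VT. (r0, v) \<in> ET\<^sup>*)"

definition is_dtd :: "'a set \<Rightarrow> ('a \<times> 'a) set \<Rightarrow> nat set \<Rightarrow> (nat \<times> nat) set \<Rightarrow> nat
     \<Rightarrow> (nat \<times> nat \<Rightarrow> 'a set) \<Rightarrow> (nat \<Rightarrow> 'a set) \<Rightarrow> bool" where
  "is_dtd V E VT ET r0 X W \<longleftrightarrow>
     out_tree VT ET r0 \<and>
     (\<forall>e\<in>ET. X e \<subseteq> V) \<and>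
     (\<forall>r\<in>VT. W r \<noteq> {} \<and> W r \<subseteq> V) \<and>
     (\<forall>r\<in>VT. \<forall>s\<in>VT. r \<noteq> s \<longrightarrow> W r \<inter> W s = {}) \<and>
     (\<Union>r\<in>VT. W r) = V \<and>
     (\<forall>(u, v)\<in>ET. z_normal V E (X (u, v)) (\<Union>r\<in>{r\<in>VT. (v, r) \<in> ET\<^sup>*}. W r))"

definition dtd_width :: "nat set \<Rightarrow> (nat \<times> nat) set \<Rightarrow> (nat \<times> nat \<Rightarrow> 'a set) \<Rightarrow> (nat \<Rightarrow> 'a set) \<Rightarrow> nat" where
  "dtd_width VT ET X W =
     Max ((\<lambda>r. card (W r \<union> (\<Union>e\<in>{e\<in>ET. fst e = r \<or> snd e = r}. X e))) ` VT) - 1"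

definition dtw :: "'a set \<Rightarrow> ('a \<times> 'a) set \<Rightarrow> nat" where
  "dtw V E = (LEAST k. \<exists>VT ET r0 X W. is_dtd V E VT ET r0 X W \<and> dtd_width VT ET X W = k)"

text \<open>dico_eval t = (p, n) with p the computed width value and n the number of
 vertices; each inner node performs a constant number of arithmetic operations.\<close>

fun dico_eval :: "'a exdico_tree \<Rightarrow> nat \<times> nat" where
  "dico_eval (Leaf v) = (0, 1)"
| "dico_eval (DUnion t1 t2) =
     (let (p1, n1) = dico_eval t1; (p2, n2) = dico_eval t2 in (max p1 p2, n1 + n2))"
| "dico_eval (Series t1 t2) =
     (let (p1, n1) = dico_eval t1; (p2, n2) = dico_eval t2 in (min (p1 + n2) (p2 + n1), n1 + n2))"

text \<open>Cost model: one unit per tree node visited (constant work per node).\<close>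

fun dico_cost :: "'a exdico_tree \<Rightarrow> nat" where
  "dico_cost (Leaf v) = 1"
| "dico_cost (DUnion t1 t2) = dico_cost t1 + dico_cost t2 + 1"
| "dico_cost (Series t1 t2) = dico_cost t1 + dico_cost t2 + 1"

end

theory Submission
  imports Defs
begin


inductive reach :: "'a set \<Rightarrow> ('a \<times> 'a) set \<Rightarrow> 'a set \<Rightarrow> 'a \<Rightarrow> 'a \<Rightarrow> bool"
  for V E Z where
  rrefl: "x \<in> V \<Longrightarrow> x \<notin> Z \<Longrightarrow> reach V E Z x x"
| rstep: "(x, y) \<in> E \<Longrightarrow> x \<in> V \<Longrightarrow> x \<notin> Z \<Longrightarrow> reach V E Z y z \<Longrightarrow> reach V E Z x z"

lemma walk_single: "x \<in> V \<Longrightarrow> x \<notin> Z \<Longrightarrow> walk_avoiding V E Z [x]"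
  by (auto simp: walk_avoiding_def)

lemma walk_Cons:
  assumes "walk_avoiding V E Z (b # p)" "a \<in> V" "a \<notin> Z" "(a, b) \<in> E"
  shows "walk_avoiding V E Z (a # b # p)"
  using assms unfolding walk_avoiding_def
  apply auto
  subgoal for i by (cases i) auto
  done

lemma reach_V: "reach V E Z x y \<Longrightarrow> x \<in> V \<and> x \<notin> Z \<and> y \<in> V \<and> y \<notin> Z"
  by (induction rule: reach.induct) auto

lemma reach_walk: "reach V E Z x y \<Longrightarrow> \<exists>p. walk_avoiding V E Z p \<and> hd p = x \<and> last p = y"
proof (induction rule: reach.induct)
  case (rrefl x)
  then show ?case using walk_single by fastforce
next
  case (rstep x y z)
  then obtain p where p: "walk_avoiding V E Z p" "hd p = y" "last p = z" by blast
  then obtain p' where "p = y # p'" unfolding walk_avoiding_def by (cases p) auto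
  then show ?case using p rstep walk_Cons[of V E Z y p' x] by (intro exI[of _ "x # p"]) auto
qed

lemma reach_walk_through:
  "reach V E Z a w \<Longrightarrow> reach V E Z w b \<Longrightarrow>
    \<exists>p. walk_avoiding V E Z p \<and> hd p = a \<and> last p = b \<and> w \<in> set p"
proof (induction rule: reach.induct)
  case (rrefl x)
  then obtain p where p: "walk_avoiding V E Z p" "hd p = x" "last p = b"
    using reach_walk[of V E Z x b] rrefl by blast
  then have "x \<in> set p" unfolding walk_avoiding_def by (cases p) auto
  then show ?case using p by blast
next
  case (rstep x y z)
  then obtain p where p: "walk_avoiding V E Z p" "hd p = y" "last p = b" "z \<in> set p" by blast
  then obtain p' where "p = y # p'" unfolding walk_avoiding_def by (cases p) auto
  then show ?case using p rstep walk_Cons[of V E Z y p' x] by (intro exI[of _ "x # p"]) auto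
qed

lemma reach_closed:
  assumes "reach V E Z x y" "x \<in> B"
    "\<And>u v. (u, v) \<in> E \<Longrightarrow> u \<in> B \<Longrightarrow> v \<in> V \<Longrightarrow> v \<notin> Z \<Longrightarrow> v \<in> B"
  shows "y \<in> B"
  using assms(1,2)
proof (induction rule: reach.induct)
  case (rrefl x) then show ?case by simp
next
  case (rstep x y z)
  then show ?case using reach_V[OF rstep(4)] assms(3) by blast
qed

lemma reach_mono:
  assumes "reach V1 E1 Z1 x y" "V1 \<subseteq> V" "E1 \<subseteq> E" "Z \<inter> V1 \<subseteq> Z1"
  shows "reach V E Z x y"
  using assms(1)
proof (induction rule: reach.induct)
  case (rrefl x) then show ?case using assms by (auto intro: reach.rrefl)
next
  case (rstep x y z) then show ?case using assms by (auto intro: reach.rstep)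
qed

lemma reach_arc: "(x, y) \<in> E \<Longrightarrow> x \<in> V \<Longrightarrow> x \<notin> Z \<Longrightarrow> y \<in> V \<Longrightarrow> y \<notin> Z \<Longrightarrow> reach V E Z x y"
  by (auto intro: reach.intros)

lemma walk_closed:
  assumes "walk_avoiding V E Z p" "hd p \<in> B"
    "\<And>u v. (u, v) \<in> E \<Longrightarrow> u \<in> B \<Longrightarrow> u \<notin> Z \<Longrightarrow> v \<notin> Z \<Longrightarrow> v \<in> B"
  shows "set p \<subseteq> B"
proof -
  have ne: "p \<noteq> []" and sub: "set p \<subseteq> V - Z" and st: "\<And>i. Suc i < length p \<Longrightarrow> (p ! i, p ! Suc i) \<in> E"
    using assms(1) unfolding walk_avoiding_def by auto
  have "i < length p \<Longrightarrow> p ! i \<in> B" for i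
  proof (induction i)
    case 0 then show ?case using assms(2) ne by (simp add: hd_conv_nth)
  next
    case (Suc i)
    have "p ! i \<in> set p" "p ! Suc i \<in> set p" using Suc by auto
    then have "p ! i \<notin> Z" "p ! Suc i \<notin> Z" using sub by auto
    then show ?case using Suc st[of i] assms(3) by auto
  qed
  then show ?thesis by (auto simp: in_set_conv_nth)
qed

definition haven :: "'a set \<Rightarrow> ('a \<times> 'a) set \<Rightarrow> nat \<Rightarrow> ('a set \<Rightarrow> 'a set) \<Rightarrow> bool" where
  "haven V E k \<beta> \<longleftrightarrow> (\<forall>Z. Z \<subseteq> V \<and> card Z < k \<longrightarrow>
     \<beta> Z \<noteq> {} \<and> \<beta> Z \<subseteq> V - Z \<and> (\<forall>x\<in>\<beta> Z. \<forall>y\<in>\<beta> Z. reach V E Z x y) \<and>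
     (\<forall>Z'. Z \<subseteq> Z' \<and> Z' \<subseteq> V \<and> card Z' < k \<longrightarrow> \<beta> Z' \<subseteq> \<beta> Z))"



lemma out_tree_acyclic:
  assumes "out_tree VT ET r0"
  shows "acyclic ET"
proof -
  have fin: "finite VT" and r0: "r0 \<in> VT" and sub: "ET \<subseteq> VT \<times> VT"
    and noin: "\<And>u. (u, r0) \<notin> ET" and uniq: "\<And>v. v \<in> VT - {r0} \<Longrightarrow> \<exists>!u. (u, v) \<in> ET"
    and reach: "\<And>v. v \<in> VT \<Longrightarrow> (r0, v) \<in> ET\<^sup>*"
    using assms unfolding out_tree_def by auto
  have main: "(r0, x) \<in> ET\<^sup>* \<Longrightarrow> (x, x) \<notin> ET\<^sup>+" for x
  proof (induction rule: rtrancl_induct)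
    case base
    show ?case
    proof
      assume "(r0, r0) \<in> ET\<^sup>+"
      then obtain z where "(z, r0) \<in> ET" by (auto elim: tranclE)
      then show False using noin by blast
    qed
  next
    case (step y x)
    show ?case
    proof
      assume "(x, x) \<in> ET\<^sup>+"
      then obtain z where z1: "(x, z) \<in> ET\<^sup>*" and z2: "(z, x) \<in> ET"
        by (auto elim: tranclE dest: trancl_into_rtrancl)
      have "x \<noteq> r0" using step(2) noin by blast
      moreover have "x \<in> VT" using step(2) sub by blast
      ultimately have "z = y" using uniq[of x] z2 step(2) by blast
      then have "(y, y) \<in> ET\<^sup>+" using z1 step(2) by (meson rtrancl_into_trancl2)
      then show False using step(3) by blast
    qed
  qed
  show ?thesis unfolding acyclic_def
  proof
    fix x
    show "(x, x) \<notin> ET\<^sup>+"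
    proof
      assume a: "(x, x) \<in> ET\<^sup>+"
      then obtain z where "(x, z) \<in> ET" by (auto elim: converse_tranclE)
      then have "x \<in> VT" using sub by blast
      then show False using main reach a by blast
    qed
  qed
qed

definition Gam :: "nat set \<Rightarrow> (nat \<times> nat) set \<Rightarrow> (nat \<times> nat \<Rightarrow> 'a set) \<Rightarrow> (nat \<Rightarrow> 'a set) \<Rightarrow> nat \<Rightarrow> 'a set" where
  "Gam VT ET X W r = W r \<union> (\<Union>e\<in>{e\<in>ET. fst e = r \<or> snd e = r}. X e)"

lemma dtd_lower:
  assumes dtd: "is_dtd V E VT ET r0 X W" and hv: "haven V E k \<beta>" and finV: "finite V"
  shows "\<exists>r\<in>VT. k \<le> card (Gam VT ET X W r)"
proof (rule ccontr)
  assume "\<not> ?thesis"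
  then have small: "\<And>r. r \<in> VT \<Longrightarrow> card (Gam VT ET X W r) < k" by force
  have ot: "out_tree VT ET r0" and Xsub: "\<And>e. e \<in> ET \<Longrightarrow> X e \<subseteq> V"
    and Wsub: "\<And>r. r \<in> VT \<Longrightarrow> W r \<subseteq> V"
    and Wall: "(\<Union>r\<in>VT. W r) = V"
    and norm: "\<And>u v. (u, v) \<in> ET \<Longrightarrow> z_normal V E (X (u, v)) (\<Union>r\<in>{r\<in>VT. (v, r) \<in> ET\<^sup>*}. W r)"
    using dtd unfolding is_dtd_def by auto
  have fin: "finite VT" and r0: "r0 \<in> VT" and sub: "ET \<subseteq> VT \<times> VT"
    and reachr: "\<And>v. v \<in> VT \<Longrightarrow> (r0, v) \<in> ET\<^sup>*"
    using ot unfolding out_tree_def by auto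
  define S where "S v = (\<Union>r\<in>{r\<in>VT. (v, r) \<in> ET\<^sup>*}. W r)" for v
  define G where "G r = Gam VT ET X W r" for r
  have Gsub: "r \<in> VT \<Longrightarrow> G r \<subseteq> V" for r
    using Wsub Xsub unfolding G_def Gam_def by (auto; metis subsetD)
  have Gfin: "r \<in> VT \<Longrightarrow> finite (G r)" for r using Gsub finV finite_subset by blast
  have hv': "\<And>Z. Z \<subseteq> V \<Longrightarrow> card Z < k \<Longrightarrow>
     \<beta> Z \<noteq> {} \<and> \<beta> Z \<subseteq> V - Z \<and> (\<forall>x\<in>\<beta> Z. \<forall>y\<in>\<beta> Z. reach V E Z x y) \<and>
     (\<forall>Z'. Z \<subseteq> Z' \<and> Z' \<subseteq> V \<and> card Z' < k \<longrightarrow> \<beta> Z' \<subseteq> \<beta> Z)"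
    using hv unfolding haven_def by (metis (no_types, lifting))
  define P where "P r \<longleftrightarrow> r \<in> VT \<and> \<beta> (G r) \<subseteq> S r" for r
  have step: "\<exists>v. (r, v) \<in> ET \<and> P v" if Pr: "P r" for r
  proof -
    have rV: "r \<in> VT" and bs: "\<beta> (G r) \<subseteq> S r" using Pr unfolding P_def by auto
    note h1 = hv'[OF Gsub[OF rV] small[OF rV, folded G_def]]
    then obtain x where x: "x \<in> \<beta> (G r)" by blast
    have xS: "x \<in> S r" using x bs by blast
    have xG: "x \<notin> G r" using x h1 by blast
    then have xW: "x \<notin> W r" unfolding G_def Gam_def by blast
    from xS obtain r' where r': "r' \<in> VT" "(r, r') \<in> ET\<^sup>*" "x \<in> W r'" unfolding S_def by blast
    then have "r' \<noteq> r" using xW by blast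
    then obtain v where v1: "(r, v) \<in> ET" and v2: "(v, r') \<in> ET\<^sup>*"
      using r'(2) by (auto elim: converse_rtranclE)
    have vV: "v \<in> VT" using v1 sub by blast
    have xSv: "x \<in> S v" using r' v2 unfolding S_def by blast
    define Z where "Z = X (r, v)"
    have ZGr: "Z \<subseteq> G r" unfolding Z_def G_def Gam_def using v1 by force
    have ZGv: "Z \<subseteq> G v" unfolding Z_def G_def Gam_def using v1 by force
    have ZV: "Z \<subseteq> V" using ZGr Gsub[OF rV] by blast
    have Zk: "card Z < k" using card_mono[OF Gfin[OF rV] ZGr] small[OF rV, folded G_def] by linarith
    note h2 = hv'[OF ZV Zk]
    have "\<beta> (G r) \<subseteq> \<beta> Z" using h2 ZGr Gsub[OF rV] small[OF rV, folded G_def] by blast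
    then have xZ: "x \<in> \<beta> Z" using x by blast
    have bZ: "\<beta> Z \<subseteq> S v"
    proof
      fix y assume y: "y \<in> \<beta> Z"
      show "y \<in> S v"
      proof (rule ccontr)
        assume yS: "y \<notin> S v"
        have "reach V E Z x y" "reach V E Z y x" using h2 xZ y by blast+
        then obtain p where p: "walk_avoiding V E Z p" "hd p = x" "last p = x" "y \<in> set p"
          using reach_walk_through by metis
        moreover have "y \<notin> Z" using h2 y by blast
        ultimately have "\<exists>p. walk_avoiding V E Z p \<and> hd p \<in> S v \<and> last p \<in> S v \<and> (\<exists>w\<in>set p. w \<notin> Z \<union> S v)"
          using xSv yS by (intro exI[of _ p]) auto
        then have "\<not> z_normal V E Z (S v)"
          unfolding z_normal_def by blast
        then show False using norm[OF v1] unfolding Z_def S_def by blast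
      qed
    qed
    have "\<beta> (G v) \<subseteq> \<beta> Z" using h2 ZGv Gsub[OF vV] small[OF vV, folded G_def] by blast
    then have "P v" using bZ vV unfolding P_def by blast
    then show ?thesis using v1 by blast
  qed
  have wf: "wf (ET\<inverse>)"
    using finite_acyclic_wf_converse[OF finite_subset[OF sub] out_tree_acyclic[OF ot]] fin by blast
  have "\<not> P r" for r
    using wf
  proof (induction r rule: wf_induct_rule)
    case (less r)
    then show ?case using step by blast
  qed
  moreover have "P r0"
  proof -
    have "S r0 = V" unfolding S_def using reachr Wall by blast
    moreover have "\<beta> (G r0) \<subseteq> V" using hv'[OF Gsub[OF r0] small[OF r0, folded G_def]] by blast
    ultimately show ?thesis unfolding P_def using r0 by blast
  qed
  ultimately show False by blast
qed



lemma disc_step: "P 0 \<Longrightarrow> \<not> P m \<Longrightarrow> \<exists>i. Suc i \<le> m \<and> P i \<and> \<not> P (Suc i)"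
proof (induction m)
  case 0 then show ?case by simp
next
  case (Suc m)
  then show ?case by (metis le_SucI order_refl)
qed

lemma dpd_lower:
  assumes dpd: "is_dpd V E Xs" and hv: "haven V E k \<beta>" and finV: "finite V"
  shows "\<exists>X\<in>set Xs. k \<le> card X"
proof (rule ccontr)
  assume "\<not> ?thesis"
  then have small: "\<And>i. i < length Xs \<Longrightarrow> card (Xs ! i) < k" by (meson nth_mem not_le)
  define n where "n = length Xs"
  have ne: "Xs \<noteq> []" using dpd unfolding is_dpd_def by blast
  have bsub: "\<And>i. i < n \<Longrightarrow> Xs ! i \<subseteq> V" using dpd unfolding is_dpd_def n_def by (meson nth_mem)
  have cov: "\<Union>(set Xs) = V" using dpd unfolding is_dpd_def by blast
  have arcs: "\<And>u v. (u, v) \<in> E \<Longrightarrow> \<exists>i j. i \<le> j \<and> j < n \<and> u \<in> Xs ! i \<and> v \<in> Xs ! j"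
    using dpd unfolding is_dpd_def n_def by fast
  have intv: "\<And>v i j l. i \<le> j \<Longrightarrow> j \<le> l \<Longrightarrow> l < n \<Longrightarrow> v \<in> Xs ! i \<Longrightarrow> v \<in> Xs ! l \<Longrightarrow> v \<in> Xs ! j"
    using dpd unfolding is_dpd_def n_def by blast
  have n0: "0 < n" using ne n_def by simp
  have hv': "\<And>Z. Z \<subseteq> V \<Longrightarrow> card Z < k \<Longrightarrow>
     \<beta> Z \<noteq> {} \<and> \<beta> Z \<subseteq> V - Z \<and> (\<forall>x\<in>\<beta> Z. \<forall>y\<in>\<beta> Z. reach V E Z x y) \<and>
     (\<forall>Z'. Z \<subseteq> Z' \<and> Z' \<subseteq> V \<and> card Z' < k \<longrightarrow> \<beta> Z' \<subseteq> \<beta> Z)"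
    using hv unfolding haven_def by (metis (no_types, lifting))
  have inbag: "v \<in> V \<Longrightarrow> \<exists>j<n. v \<in> Xs ! j" for v
    using cov unfolding n_def by (auto simp: in_set_conv_nth)
  define A where "A m Z = {v\<in>V. v \<notin> Z \<and> (\<exists>j<m. v \<in> Xs ! j)}" for m Z
  define B where "B m Z = {v\<in>V. v \<notin> Z \<and> (\<exists>j. m \<le> j \<and> j < n \<and> v \<in> Xs ! j)}" for m Z
  define Cut where "Cut m Z \<longleftrightarrow> (\<forall>v. (\<exists>j<m. v \<in> Xs ! j) \<and> (\<exists>j. m \<le> j \<and> j < n \<and> v \<in> Xs ! j) \<longrightarrow> v \<in> Z)" for m Z
  have cut_closed: "\<And>u v. Cut m Z \<Longrightarrow> (u, v) \<in> E \<Longrightarrow> u \<in> B m Z \<Longrightarrow> v \<in> V \<Longrightarrow> v \<notin> Z \<Longrightarrow> v \<in> B m Z" for m Z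
  proof -
    fix u v assume c: "Cut m Z" and e: "(u, v) \<in> E" and u: "u \<in> B m Z" and v: "v \<in> V" "v \<notin> Z"
    obtain i j where ij: "i \<le> j" "j < n" "u \<in> Xs ! i" "v \<in> Xs ! j" using arcs[OF e] by blast
    have "\<not> i < m" using c u ij unfolding Cut_def B_def by auto
    then have "m \<le> j" using ij by linarith
    then show "v \<in> B m Z" using ij v unfolding B_def by blast
  qed
  have cut_disj: "Cut m Z \<Longrightarrow> A m Z \<inter> B m Z = {}" for m Z
    unfolding Cut_def A_def B_def by blast
  have cover: "V - Z \<subseteq> A m Z \<union> B m Z" for m Z
  proof
    fix v assume "v \<in> V - Z"
    then obtain j where "j < n" "v \<in> Xs ! j" using inbag by blast
    then show "v \<in> A m Z \<union> B m Z" using \<open>v \<in> V - Z\<close> unfolding A_def B_def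
      by (cases "j < m") auto
  qed
  have side: "\<beta> Z \<subseteq> B m Z" if th: "Cut m Z" "Z \<subseteq> V" "card Z < k" "\<beta> Z \<inter> B m Z \<noteq> {}" for m Z
  proof
    fix y assume y: "y \<in> \<beta> Z"
    obtain x where x: "x \<in> \<beta> Z" "x \<in> B m Z" using th(4) by blast
    have "reach V E Z x y" using hv'[OF th(2,3)] x y by blast
    then show "y \<in> B m Z" using reach_closed[of V E Z x y "B m Z"] x cut_closed[OF th(1)] by blast
  qed
  have cut_bag: "Cut i (Xs ! i)" if "i < n" for i
    unfolding Cut_def
  proof (intro allI impI)
    fix v assume "(\<exists>j<i. v \<in> Xs ! j) \<and> (\<exists>j. i \<le> j \<and> j < n \<and> v \<in> Xs ! j)"
    then obtain j1 j2 where "j1 < i" "v \<in> Xs ! j1" "i \<le> j2" "j2 < n" "v \<in> Xs ! j2" by blast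
    then show "v \<in> Xs ! i" using intv[of j1 i j2 v] by simp
  qed
  have cut_two: "Cut (Suc i) (Xs ! i \<inter> Xs ! Suc i)" if "Suc i < n" for i
    unfolding Cut_def
  proof (intro allI impI)
    fix v assume "(\<exists>j<Suc i. v \<in> Xs ! j) \<and> (\<exists>j. Suc i \<le> j \<and> j < n \<and> v \<in> Xs ! j)"
    then obtain j1 j2 where "j1 < Suc i" "v \<in> Xs ! j1" "Suc i \<le> j2" "j2 < n" "v \<in> Xs ! j2" by blast
    then show "v \<in> Xs ! i \<inter> Xs ! Suc i" using intv[of j1 i j2 v] intv[of j1 "Suc i" j2 v] by simp
  qed
  define R where "R i \<longleftrightarrow> \<beta> (Xs ! i) \<inter> B i (Xs ! i) \<noteq> {}" for i
  have R0: "R 0"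
  proof -
    have "\<beta> (Xs ! 0) \<noteq> {}" "\<beta> (Xs ! 0) \<subseteq> V - Xs ! 0" using hv'[OF bsub[OF n0] small] n0 n_def by auto
    moreover have "A 0 (Xs ! 0) = {}" unfolding A_def by auto
    ultimately show ?thesis unfolding R_def using cover[of "Xs ! 0" 0] by blast
  qed
  have Rn: "\<not> R (n - 1)"
  proof -
    have "B (n - 1) (Xs ! (n - 1)) = {}" unfolding B_def by auto (metis diff_Suc_1 le_antisym less_Suc_eq_le n0 Suc_pred)
    then show ?thesis unfolding R_def by blast
  qed
  obtain i where i: "Suc i \<le> n - 1" "R i" "\<not> R (Suc i)" using disc_step[of R "n - 1"] R0 Rn by blast
  have iSn: "Suc i < n" using i(1) n0 by linarith
  have in_: "i < n" using iSn by simp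
  define Z where "Z = Xs ! i \<inter> Xs ! Suc i"
  have ZV: "Z \<subseteq> V" using bsub[OF in_] Z_def by blast
  have fin_i: "finite (Xs ! i)" using bsub[OF in_] finV finite_subset by blast
  have Zk: "card Z < k" using card_mono[OF fin_i, of Z] Z_def small[of i] in_ n_def by auto
  have fin_si: "finite (Xs ! Suc i)" using bsub[OF iSn] finV finite_subset by blast
  note hZ = hv'[OF ZV Zk]
  have ki: "card (Xs ! i) < k" using small in_ n_def by simp
  have ksi: "card (Xs ! Suc i) < k" using small iSn n_def by simp
  note hi = hv'[OF bsub[OF in_] ki]
  note hsi = hv'[OF bsub[OF iSn] ksi]
  have bi: "\<beta> (Xs ! i) \<subseteq> B i (Xs ! i)"
    using side[OF cut_bag[OF in_] bsub[OF in_] ki] i(2) unfolding R_def by blast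
  obtain x where x: "x \<in> \<beta> (Xs ! i)" using hi by blast
  have xZ: "x \<in> \<beta> Z" using x hZ Z_def bsub[OF in_] ki by blast
  have xB: "x \<in> B (Suc i) Z"
  proof -
    have "x \<in> B i (Xs ! i)" using x bi by blast
    then obtain j where j: "i \<le> j" "j < n" "x \<in> Xs ! j" "x \<in> V" "x \<notin> Xs ! i" unfolding B_def by blast
    then have "j \<noteq> i" by blast
    then show ?thesis using j Z_def unfolding B_def by auto
  qed
  have bZ: "\<beta> Z \<subseteq> B (Suc i) Z"
    using side[OF cut_two[OF iSn, folded Z_def] ZV Zk] xZ xB by blast
  obtain y where y: "y \<in> \<beta> (Xs ! Suc i)" using hsi by blast
  have yZ: "y \<in> \<beta> Z" using y hZ Z_def bsub[OF iSn] ksi by blast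
  have "y \<notin> B (Suc i) (Xs ! Suc i)" using y i(3) unfolding R_def by blast
  moreover have "y \<in> V - Xs ! Suc i" using y hsi by blast
  ultimately have "y \<in> A (Suc i) (Xs ! Suc i)" using cover by blast
  then have "y \<in> A (Suc i) Z" unfolding A_def Z_def by blast
  moreover have "y \<in> B (Suc i) Z" using yZ bZ by blast
  ultimately show False using cut_disj[OF cut_two[OF iSn, folded Z_def]] by blast
qed



lemma eval_DU [simp]: "dico_eval (DUnion t1 t2) =
  (max (fst (dico_eval t1)) (fst (dico_eval t2)), snd (dico_eval t1) + snd (dico_eval t2))"
  by (cases "dico_eval t1"; cases "dico_eval t2") simp

lemma eval_S [simp]: "dico_eval (Series t1 t2) =
  (min (fst (dico_eval t1) + snd (dico_eval t2)) (fst (dico_eval t2) + snd (dico_eval t1)),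
   snd (dico_eval t1) + snd (dico_eval t2))"
  by (cases "dico_eval t1"; cases "dico_eval t2") simp

declare dico_eval.simps(2,3)[simp del]

lemma basics:
  "is_exdico_tree t V E \<Longrightarrow> finite V \<and> V \<noteq> {} \<and> E \<subseteq> V \<times> V \<and> snd (dico_eval t) = card V \<and>
     fst (dico_eval t) < card V \<and> Suc (dico_cost t) = 2 * card V"
proof (induction rule: is_exdico_tree.induct)
  case (leaf v) then show ?case by simp
next
  case (dunion t1 V1 E1 t2 V2 E2 E)
  then show ?case by (auto simp: card_Un_disjoint)
next
  case (series t1 V1 E1 t2 V2 E2)
  then show ?case by (auto simp: card_Un_disjoint)
qed

lemma hv_unf: "haven V E k \<beta> \<Longrightarrow> Z \<subseteq> V \<Longrightarrow> card Z < k \<Longrightarrow>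
     \<beta> Z \<noteq> {} \<and> \<beta> Z \<subseteq> V - Z \<and> (\<forall>x\<in>\<beta> Z. \<forall>y\<in>\<beta> Z. reach V E Z x y) \<and>
     (\<forall>Z'. Z \<subseteq> Z' \<and> Z' \<subseteq> V \<and> card Z' < k \<longrightarrow> \<beta> Z' \<subseteq> \<beta> Z)"
  unfolding haven_def by (metis (no_types, lifting))

lemma hv_ne: "haven V E k \<beta> \<Longrightarrow> Z \<subseteq> V \<Longrightarrow> card Z < k \<Longrightarrow> \<beta> Z \<noteq> {}"
  using hv_unf by blast
lemma hv_sub: "haven V E k \<beta> \<Longrightarrow> Z \<subseteq> V \<Longrightarrow> card Z < k \<Longrightarrow> \<beta> Z \<subseteq> V - Z"
  using hv_unf by blast
lemma hv_reach: "haven V E k \<beta> \<Longrightarrow> Z \<subseteq> V \<Longrightarrow> card Z < k \<Longrightarrow> x \<in> \<beta> Z \<Longrightarrow> y \<in> \<beta> Z \<Longrightarrow> reach V E Z x y"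
  using hv_unf by blast
lemma hv_mono: "haven V E k \<beta> \<Longrightarrow> Z \<subseteq> V \<Longrightarrow> card Z < k \<Longrightarrow> Z \<subseteq> Z' \<Longrightarrow> Z' \<subseteq> V \<Longrightarrow> card Z' < k \<Longrightarrow> \<beta> Z' \<subseteq> \<beta> Z"
  using hv_unf by blast

lemma haven_leaf: "haven {v} {} 1 (\<lambda>Z. {v})"
  unfolding haven_def
proof (intro allI impI)
  fix Z :: "'a set" assume Z: "Z \<subseteq> {v} \<and> card Z < 1"
  then have "Z = {}" by (metis card_0_eq finite.emptyI finite_insert finite_subset less_one)
  then show "{v} \<noteq> {} \<and> {v} \<subseteq> {v} - Z \<and> (\<forall>x\<in>{v}. \<forall>y\<in>{v}. reach {v} {} Z x y) \<and>
         (\<forall>Z'. Z \<subseteq> Z' \<and> Z' \<subseteq> {v} \<and> card Z' < 1 \<longrightarrow> {v} \<subseteq> {v})"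
    by (auto intro: reach.rrefl)
qed

lemma haven_sub:
  assumes h: "haven V1 E1 k \<beta>" and "V1 \<subseteq> V" "E1 \<subseteq> E" "finite V"
  shows "haven V E k (\<lambda>Z. \<beta> (Z \<inter> V1))"
  unfolding haven_def
proof (intro allI impI)
  fix Z assume Z: "Z \<subseteq> V \<and> card Z < k"
  have fZ: "finite Z" using Z assms(4) finite_subset by blast
  have ck: "card (Z \<inter> V1) < k" using card_mono[OF fZ, of "Z \<inter> V1"] Z by auto
  have r: "reach V E Z x y" if "reach V1 E1 (Z \<inter> V1) x y" for x y
    using reach_mono[OF that assms(2,3)] by blast
  show "\<beta> (Z \<inter> V1) \<noteq> {} \<and> \<beta> (Z \<inter> V1) \<subseteq> V - Z \<and>
         (\<forall>x\<in>\<beta> (Z \<inter> V1). \<forall>y\<in>\<beta> (Z \<inter> V1). reach V E Z x y) \<and>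
         (\<forall>Z'. Z \<subseteq> Z' \<and> Z' \<subseteq> V \<and> card Z' < k \<longrightarrow> \<beta> (Z' \<inter> V1) \<subseteq> \<beta> (Z \<inter> V1))"
  proof (intro conjI ballI allI impI)
    show "\<beta> (Z \<inter> V1) \<noteq> {}" using hv_ne[OF h _ ck] by blast
    show "\<beta> (Z \<inter> V1) \<subseteq> V - Z" using hv_sub[OF h _ ck] assms(2) by blast
    show "reach V E Z x y" if "x \<in> \<beta> (Z \<inter> V1)" "y \<in> \<beta> (Z \<inter> V1)" for x y
      using hv_reach[OF h _ ck that] r by blast
    show "\<beta> (Z' \<inter> V1) \<subseteq> \<beta> (Z \<inter> V1)" if "Z \<subseteq> Z' \<and> Z' \<subseteq> V \<and> card Z' < k" for Z'
    proof -
      have fZ': "finite Z'" using that assms(4) finite_subset by blast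
      have "card (Z' \<inter> V1) < k" using card_mono[OF fZ', of "Z' \<inter> V1"] that by auto
      then show ?thesis using hv_mono[OF h _ ck, of "Z' \<inter> V1"] that by blast
    qed
  qed
qed

lemma haven_series:
  assumes h1: "haven V1 E1 k1 \<beta>1" and h2: "haven V2 E2 k2 \<beta>2"
    and d: "V1 \<inter> V2 = {}" and f1: "finite V1" and f2: "finite V2"
    and k1: "k1 \<le> card V1" and k2: "k2 \<le> card V2"
    and E: "E1 \<subseteq> E" "E2 \<subseteq> E" "V1 \<times> V2 \<subseteq> E" "V2 \<times> V1 \<subseteq> E"
  shows "\<exists>\<beta>. haven (V1 \<union> V2) E (min (k1 + card V2) (k2 + card V1)) \<beta>"
proof -
  define V where "V = V1 \<union> V2"
  define k where "k = min (k1 + card V2) (k2 + card V1)"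
  define \<beta> where "\<beta> Z = (if V2 \<subseteq> Z then \<beta>1 (Z \<inter> V1) else if V1 \<subseteq> Z then \<beta>2 (Z \<inter> V2) else V - Z)" for Z
  have fV: "finite V" using f1 f2 V_def by simp
  have cardV: "card V = card V1 + card V2" using card_Un_disjoint[OF f1 f2 d] V_def by simp
  have c1: "card (Z \<inter> V1) < k1" if "Z \<subseteq> V" "card Z < k" "V2 \<subseteq> Z" for Z
  proof -
    have "Z = (Z \<inter> V1) \<union> V2" using that V_def by blast
    then have "card Z = card (Z \<inter> V1) + card V2"
      using card_Un_disjoint[of "Z \<inter> V1" V2] f1 f2 d by (metis Int_commute inf_bot_right inf_left_commute finite_Int)
    moreover have "k \<le> k1 + card V2" using k_def by simp
    ultimately show ?thesis using that by linarith
  qed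
  have c2: "card (Z \<inter> V2) < k2" if "Z \<subseteq> V" "card Z < k" "V1 \<subseteq> Z" for Z
  proof -
    have "Z = (Z \<inter> V2) \<union> V1" using that V_def by blast
    then have "card Z = card (Z \<inter> V2) + card V1"
      using card_Un_disjoint[of "Z \<inter> V2" V1] f1 f2 d by (metis Int_commute inf_bot_right inf_left_commute finite_Int)
    moreover have "k \<le> k2 + card V1" using k_def by simp
    ultimately show ?thesis using that by linarith
  qed
  have notboth: "\<not> (V1 \<subseteq> Z \<and> V2 \<subseteq> Z)" if "Z \<subseteq> V" "card Z < k" for Z
  proof
    assume "V1 \<subseteq> Z \<and> V2 \<subseteq> Z"
    then have "Z = V" using that V_def by blast
    have "k \<le> k1 + card V2" using k_def by simp
    moreover have "card Z = card V" using \<open>Z = V\<close> by simp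
    ultimately show False using that cardV k1 by linarith
  qed
  have r1: "reach V E Z x y" if "reach V1 E1 (Z \<inter> V1) x y" for x y Z
    using reach_mono[OF that _ E(1), of V Z] V_def by blast
  have r2: "reach V E Z x y" if "reach V2 E2 (Z \<inter> V2) x y" for x y Z
    using reach_mono[OF that _ E(2), of V Z] V_def by blast
  have main: "\<beta> Z \<noteq> {} \<and> \<beta> Z \<subseteq> V - Z \<and> (\<forall>x\<in>\<beta> Z. \<forall>y\<in>\<beta> Z. reach V E Z x y)"
    if Z: "Z \<subseteq> V" "card Z < k" for Z
  proof (cases "V2 \<subseteq> Z")
    case True
    have a: "Z \<inter> V1 \<subseteq> V1" by blast
    note cc = c1[OF Z True]
    show ?thesis using hv_ne[OF h1 a cc] hv_sub[OF h1 a cc] hv_reach[OF h1 a cc] r1 True V_def \<beta>_def by auto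
  next
    case F2: False
    show ?thesis
    proof (cases "V1 \<subseteq> Z")
      case True
      have a: "Z \<inter> V2 \<subseteq> V2" by blast
      note cc = c2[OF Z True]
      show ?thesis using hv_ne[OF h2 a cc] hv_sub[OF h2 a cc] hv_reach[OF h2 a cc] r2 True F2 V_def \<beta>_def by auto
    next
      case F1: False
      obtain a where a: "a \<in> V1" "a \<notin> Z" using F1 by blast
      obtain b where b: "b \<in> V2" "b \<notin> Z" using F2 by blast
      have bz: "\<beta> Z = V - Z" using F1 F2 \<beta>_def by simp
      have conn: "reach V E Z x y" if xy: "x \<in> V - Z" "y \<in> V - Z" for x y
      proof -
        have aV: "a \<in> V" "b \<in> V" using a b V_def by auto
        consider "x \<in> V1" "y \<in> V1" | "x \<in> V1" "y \<in> V2" | "x \<in> V2" "y \<in> V1" | "x \<in> V2" "y \<in> V2"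
          using xy V_def by blast
        then show ?thesis
        proof cases
          case 1
          have "reach V E Z b y" using reach_arc[of b y E V Z] 1 b xy E(4) aV by blast
          then show ?thesis using 1 b xy E(3) by (auto intro: reach.rstep)
        next
          case 2 then show ?thesis using reach_arc[of x y E V Z] xy E(3) by blast
        next
          case 3 then show ?thesis using reach_arc[of x y E V Z] xy E(4) by blast
        next
          case 4
          have "reach V E Z a y" using reach_arc[of a y E V Z] 4 a xy E(3) aV by blast
          then show ?thesis using 4 a xy E(4) by (auto intro: reach.rstep)
        qed
      qed
      show ?thesis using bz conn b V_def by auto
    qed
  qed
  have mono: "\<beta> Z' \<subseteq> \<beta> Z" if Z: "Z \<subseteq> V" "card Z < k" and Z': "Z \<subseteq> Z'" "Z' \<subseteq> V" "card Z' < k" for Z Z'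
  proof (cases "V2 \<subseteq> Z")
    case True
    then have "V2 \<subseteq> Z'" using Z' by blast
    then show ?thesis using True hv_mono[OF h1 _ c1[OF Z True] _ _ c1[OF Z'(2,3)]] Z' \<beta>_def by auto
  next
    case F2: False
    show ?thesis
    proof (cases "V1 \<subseteq> Z")
      case True
      then have "V1 \<subseteq> Z'" using Z' by blast
      then have "\<not> V2 \<subseteq> Z'" using notboth[OF Z'(2,3)] by blast
      then show ?thesis using True F2 \<open>V1 \<subseteq> Z'\<close> hv_mono[OF h2 _ c2[OF Z True] _ _ c2[OF Z'(2,3)]] Z' \<beta>_def by auto
    next
      case F1: False
      then have "\<beta> Z = V - Z" using F2 \<beta>_def by simp
      moreover have "\<beta> Z' \<subseteq> V - Z'" using main[OF Z'(2,3)] by blast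
      ultimately show ?thesis using Z' by blast
    qed
  qed
  have "haven V E k \<beta>" unfolding haven_def using main mono by blast
  then show ?thesis unfolding V_def k_def by blast
qed

lemma haven_exists: "is_exdico_tree t V E \<Longrightarrow> \<exists>\<beta>. haven V E (Suc (fst (dico_eval t))) \<beta>"
proof (induction rule: is_exdico_tree.induct)
  case (leaf v) then show ?case using haven_leaf by fastforce
next
  case (dunion t1 V1 E1 t2 V2 E2 E)
  obtain \<beta>1 where b1: "haven V1 E1 (Suc (fst (dico_eval t1))) \<beta>1" using dunion by blast
  obtain \<beta>2 where b2: "haven V2 E2 (Suc (fst (dico_eval t2))) \<beta>2" using dunion by blast
  have fV: "finite (V1 \<union> V2)" using basics[OF dunion(1)] basics[OF dunion(2)] by simp
  have E1: "E1 \<subseteq> E" and E2: "E2 \<subseteq> E" using dunion by auto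
  show ?case
  proof (cases "fst (dico_eval t2) \<le> fst (dico_eval t1)")
    case True
    then show ?thesis using haven_sub[OF b1 _ E1 fV] by (auto simp: max_def)
  next
    case False
    then show ?thesis using haven_sub[OF b2 _ E2 fV] by (auto simp: max_def)
  qed
next
  case (series t1 V1 E1 t2 V2 E2)
  obtain \<beta>1 where b1: "haven V1 E1 (Suc (fst (dico_eval t1))) \<beta>1" using series by blast
  obtain \<beta>2 where b2: "haven V2 E2 (Suc (fst (dico_eval t2))) \<beta>2" using series by blast
  note B1 = basics[OF series(1)] and B2 = basics[OF series(2)]
  have k1: "Suc (fst (dico_eval t1)) \<le> card V1" using B1 by simp
  have k2: "Suc (fst (dico_eval t2)) \<le> card V2" using B2 by simp
  obtain \<beta> where "haven (V1 \<union> V2) (E1 \<union> E2 \<union> V1 \<times> V2 \<union> V2 \<times> V1)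
     (min (Suc (fst (dico_eval t1)) + card V2) (Suc (fst (dico_eval t2)) + card V1)) \<beta>"
    using haven_series[OF b1 b2 series(3) _ _ k1 k2, of "E1 \<union> E2 \<union> V1 \<times> V2 \<union> V2 \<times> V1"] B1 B2 by blast
  moreover have "min (Suc (fst (dico_eval t1)) + card V2) (Suc (fst (dico_eval t2)) + card V1)
     = Suc (fst (dico_eval (Series t1 t2)))" using B1 B2 by simp
  ultimately show ?case by auto
qed



lemma dpdI:
  assumes "Xs \<noteq> []" "\<And>i. i < length Xs \<Longrightarrow> Xs ! i \<subseteq> V" "\<And>v. v \<in> V \<Longrightarrow> \<exists>i<length Xs. v \<in> Xs ! i"
    "\<And>u v. (u, v) \<in> E \<Longrightarrow> \<exists>i j. i \<le> j \<and> j < length Xs \<and> u \<in> Xs ! i \<and> v \<in> Xs ! j"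
    "\<And>v i j l. i \<le> j \<Longrightarrow> j \<le> l \<Longrightarrow> l < length Xs \<Longrightarrow> v \<in> Xs ! i \<Longrightarrow> v \<in> Xs ! l \<Longrightarrow> v \<in> Xs ! j"
  shows "is_dpd V E Xs"
proof -
  have "\<forall>X\<in>set Xs. X \<subseteq> V" using assms(2) by (metis in_set_conv_nth)
  moreover have "\<Union>(set Xs) = V"
  proof
    show "\<Union>(set Xs) \<subseteq> V" using \<open>\<forall>X\<in>set Xs. X \<subseteq> V\<close> by blast
    show "V \<subseteq> \<Union>(set Xs)" using assms(3) by (meson UnionI nth_mem subsetI)
  qed
  ultimately show ?thesis unfolding is_dpd_def using assms(1,4,5) by blast
qed

lemma dpdD:
  assumes "is_dpd V E Xs"
  shows "Xs \<noteq> []" "\<And>i. i < length Xs \<Longrightarrow> Xs ! i \<subseteq> V" "\<And>v. v \<in> V \<Longrightarrow> \<exists>i<length Xs. v \<in> Xs ! i"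
    "\<And>u v. (u, v) \<in> E \<Longrightarrow> \<exists>i j. i \<le> j \<and> j < length Xs \<and> u \<in> Xs ! i \<and> v \<in> Xs ! j"
    "\<And>v i j l. i \<le> j \<Longrightarrow> j \<le> l \<Longrightarrow> l < length Xs \<Longrightarrow> v \<in> Xs ! i \<Longrightarrow> v \<in> Xs ! l \<Longrightarrow> v \<in> Xs ! j"
proof -
  show "Xs \<noteq> []" using assms unfolding is_dpd_def by blast
  show "\<And>i. i < length Xs \<Longrightarrow> Xs ! i \<subseteq> V" using assms unfolding is_dpd_def by (meson nth_mem)
  show "\<And>v. v \<in> V \<Longrightarrow> \<exists>i<length Xs. v \<in> Xs ! i"
  proof -
    fix v assume "v \<in> V"
    then have "v \<in> \<Union>(set Xs)" using assms unfolding is_dpd_def by blast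
    then show "\<exists>i<length Xs. v \<in> Xs ! i" by (auto simp: in_set_conv_nth)
  qed
  show "\<And>u v. (u, v) \<in> E \<Longrightarrow> \<exists>i j. i \<le> j \<and> j < length Xs \<and> u \<in> Xs ! i \<and> v \<in> Xs ! j"
    using assms unfolding is_dpd_def by fast
  show "\<And>v i j l. i \<le> j \<Longrightarrow> j \<le> l \<Longrightarrow> l < length Xs \<Longrightarrow> v \<in> Xs ! i \<Longrightarrow> v \<in> Xs ! l \<Longrightarrow> v \<in> Xs ! j"
    using assms unfolding is_dpd_def by blast
qed

lemma dpd_leaf: "is_dpd {v} {} [{v}]"
  unfolding is_dpd_def by auto

lemma dpd_union:
  assumes d1: "is_dpd V1 E1 Xs1" and d2: "is_dpd V2 E2 Xs2" and dj: "V1 \<inter> V2 = {}"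
    and E: "E \<subseteq> E1 \<union> E2 \<union> V1 \<times> V2"
  shows "is_dpd (V1 \<union> V2) E (Xs1 @ Xs2)"
proof -
  note a1 = dpdD[OF d1] and a2 = dpdD[OF d2]
  define n1 where "n1 = length Xs1"
  have nth: "(Xs1 @ Xs2) ! i = (if i < n1 then Xs1 ! i else Xs2 ! (i - n1))" for i
    by (simp add: nth_append n1_def)
  have len: "length (Xs1 @ Xs2) = n1 + length Xs2" by (simp add: n1_def)
  show ?thesis
  proof (rule dpdI)
    show "Xs1 @ Xs2 \<noteq> []" using a1 by simp
    show "(Xs1 @ Xs2) ! i \<subseteq> V1 \<union> V2" if "i < length (Xs1 @ Xs2)" for i
    proof (cases "i < n1")
      case True then show ?thesis using a1(2)[of i] nth n1_def by auto
    next
      case False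
      then have "i - n1 < length Xs2" using that len by linarith
      then show ?thesis using False a2(2)[of "i - n1"] nth by auto
    qed
    show "\<exists>i<length (Xs1 @ Xs2). v \<in> (Xs1 @ Xs2) ! i" if vv: "v \<in> V1 \<union> V2" for v
    proof (cases "v \<in> V1")
      case True
      then obtain i where "i < n1" "v \<in> Xs1 ! i" using a1(3) n1_def by blast
      then show ?thesis using len nth by (intro exI[of _ i]) auto
    next
      case False
      then obtain i where "i < length Xs2" "v \<in> Xs2 ! i" using a2(3) vv by blast
      then show ?thesis using len nth by (intro exI[of _ "n1 + i"]) auto
    qed
    show "\<exists>i j. i \<le> j \<and> j < length (Xs1 @ Xs2) \<and> u \<in> (Xs1 @ Xs2) ! i \<and> v \<in> (Xs1 @ Xs2) ! j"
      if uv: "(u, v) \<in> E" for u v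
    proof -
      consider "(u, v) \<in> E1" | "(u, v) \<in> E2" | "u \<in> V1" "v \<in> V2" using uv E by blast
      then show ?thesis
      proof cases
        case 1
        then obtain i j where "i \<le> j" "j < n1" "u \<in> Xs1 ! i" "v \<in> Xs1 ! j" using a1(4) n1_def by blast
        then show ?thesis using len nth by (intro exI[of _ i] exI[of _ j]) auto
      next
        case 2
        then obtain i j where "i \<le> j" "j < length Xs2" "u \<in> Xs2 ! i" "v \<in> Xs2 ! j" using a2(4) by blast
        then show ?thesis using len nth by (intro exI[of _ "n1 + i"] exI[of _ "n1 + j"]) auto
      next
        case 3
        obtain i where "i < n1" "u \<in> Xs1 ! i" using a1(3) 3 n1_def by blast
        moreover obtain j where "j < length Xs2" "v \<in> Xs2 ! j" using a2(3) 3 by blast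
        ultimately show ?thesis using len nth by (intro exI[of _ i] exI[of _ "n1 + j"]) auto
      qed
    qed
    show "v \<in> (Xs1 @ Xs2) ! j"
      if ij: "i \<le> j" "j \<le> l" "l < length (Xs1 @ Xs2)" "v \<in> (Xs1 @ Xs2) ! i" "v \<in> (Xs1 @ Xs2) ! l" for v i j l
    proof (cases "l < n1")
      case True
      then show ?thesis using ij nth a1(5)[of i j l v] n1_def by auto
    next
      case False
      show ?thesis
      proof (cases "i < n1")
        case True
        have "v \<in> V1" using True ij(4) nth a1(2)[of i] n1_def by auto
        moreover have "l - n1 < length Xs2" using False ij(3) len by linarith
        then have "v \<in> V2" using False ij(5) nth a2(2)[of "l - n1"] by auto
        ultimately show ?thesis using dj by blast
      next
        case F2: False
        have "v \<in> Xs2 ! (j - n1)"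
          using a2(5)[of "i - n1" "j - n1" "l - n1" v] ij F2 False nth len by auto
        then show ?thesis using nth F2 ij by auto
      qed
    qed
  qed
qed

lemma dpd_series:
  assumes d1: "is_dpd V1 E1 Xs1" and dj: "V1 \<inter> V2 = {}"
    and E1: "\<And>u v. (u, v) \<in> E \<Longrightarrow> u \<in> V1 \<Longrightarrow> v \<in> V1 \<Longrightarrow> (u, v) \<in> E1"
    and E: "E \<subseteq> (V1 \<union> V2) \<times> (V1 \<union> V2)"
  shows "is_dpd (V1 \<union> V2) E (map (\<lambda>X. X \<union> V2) Xs1)"
proof -
  note a1 = dpdD[OF d1]
  show ?thesis
  proof (rule dpdI)
    show "map (\<lambda>X. X \<union> V2) Xs1 \<noteq> []" using a1 by simp
    show "map (\<lambda>X. X \<union> V2) Xs1 ! i \<subseteq> V1 \<union> V2" if "i < length (map (\<lambda>X. X \<union> V2) Xs1)" for i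
      using that a1(2)[of i] by auto
    show "\<exists>i<length (map (\<lambda>X. X \<union> V2) Xs1). v \<in> map (\<lambda>X. X \<union> V2) Xs1 ! i" if "v \<in> V1 \<union> V2" for v
    proof (cases "v \<in> V1")
      case True
      then obtain i where "i < length Xs1" "v \<in> Xs1 ! i" using a1(3) by blast
      then show ?thesis by (intro exI[of _ i]) auto
    next
      case False
      then show ?thesis using that a1(1) by (intro exI[of _ 0]) auto
    qed
    show "\<exists>i j. i \<le> j \<and> j < length (map (\<lambda>X. X \<union> V2) Xs1) \<and> u \<in> map (\<lambda>X. X \<union> V2) Xs1 ! i \<and> v \<in> map (\<lambda>X. X \<union> V2) Xs1 ! j"
      if uv: "(u, v) \<in> E" for u v
    proof (cases "u \<in> V1 \<and> v \<in> V1")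
      case True
      then obtain i j where "i \<le> j" "j < length Xs1" "u \<in> Xs1 ! i" "v \<in> Xs1 ! j" using a1(4) E1 uv by blast
      then show ?thesis by (intro exI[of _ i] exI[of _ j]) auto
    next
      case False
      then consider "u \<in> V2" "v \<in> V1" | "u \<in> V1" "v \<in> V2" | "u \<in> V2" "v \<in> V2" using uv E by blast
      then show ?thesis
      proof cases
        case 1
        then obtain j where "j < length Xs1" "v \<in> Xs1 ! j" using a1(3) by blast
        then show ?thesis using 1 by (intro exI[of _ j] exI[of _ j]) auto
      next
        case 2
        then obtain j where "j < length Xs1" "u \<in> Xs1 ! j" using a1(3) by blast
        then show ?thesis using 2 by (intro exI[of _ j] exI[of _ j]) auto
      next
        case 3
        then show ?thesis using a1(1) by (intro exI[of _ 0] exI[of _ 0]) auto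
      qed
    qed
    show "v \<in> map (\<lambda>X. X \<union> V2) Xs1 ! j"
      if ij: "i \<le> j" "j \<le> l" "l < length (map (\<lambda>X. X \<union> V2) Xs1)" "v \<in> map (\<lambda>X. X \<union> V2) Xs1 ! i"
        "v \<in> map (\<lambda>X. X \<union> V2) Xs1 ! l" for v i j l
      using ij a1(5)[of i j l v] by auto
  qed
qed

lemma card_le_Max: "finite A \<Longrightarrow> a \<in> A \<Longrightarrow> a \<le> Max A" by simp

lemma dpd_exists:
  "is_exdico_tree t V E \<Longrightarrow> \<exists>Xs. is_dpd V E Xs \<and> (\<forall>X\<in>set Xs. card X \<le> Suc (fst (dico_eval t)))"
proof (induction rule: is_exdico_tree.induct)
  case (leaf v)
  then show ?case using dpd_leaf by fastforce
next
  case (dunion t1 V1 E1 t2 V2 E2 E)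
  obtain Xs1 where x1: "is_dpd V1 E1 Xs1" "\<forall>X\<in>set Xs1. card X \<le> Suc (fst (dico_eval t1))" using dunion by blast
  obtain Xs2 where x2: "is_dpd V2 E2 Xs2" "\<forall>X\<in>set Xs2. card X \<le> Suc (fst (dico_eval t2))" using dunion by blast
  have "is_dpd (V1 \<union> V2) E (Xs1 @ Xs2)" using dpd_union[OF x1(1) x2(1) dunion(3,5)] .
  moreover have "\<forall>X\<in>set (Xs1 @ Xs2). card X \<le> Suc (fst (dico_eval (DUnion t1 t2)))"
    using x1(2) x2(2) by fastforce
  ultimately show ?case by blast
next
  case (series t1 V1 E1 t2 V2 E2)
  obtain Xs1 where x1: "is_dpd V1 E1 Xs1" "\<forall>X\<in>set Xs1. card X \<le> Suc (fst (dico_eval t1))" using series by blast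
  obtain Xs2 where x2: "is_dpd V2 E2 Xs2" "\<forall>X\<in>set Xs2. card X \<le> Suc (fst (dico_eval t2))" using series by blast
  note B1 = basics[OF series(1)] and B2 = basics[OF series(2)]
  define E where "E = E1 \<union> E2 \<union> V1 \<times> V2 \<union> V2 \<times> V1"
  have ES: "E \<subseteq> (V1 \<union> V2) \<times> (V1 \<union> V2)" using B1 B2 E_def by blast
  have e1: "(u, v) \<in> E1" if "(u, v) \<in> E" "u \<in> V1" "v \<in> V1" for u v
    using that B2 series(3) E_def by blast
  have e2: "(u, v) \<in> E2" if "(u, v) \<in> E" "u \<in> V2" "v \<in> V2" for u v
    using that B1 series(3) E_def by blast
  have bag1: "card (X \<union> V2) \<le> Suc (fst (dico_eval t1)) + card V2" if "X \<in> set Xs1" for X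
    using card_Un_le[of X V2] x1(2) that by fastforce
  have bag2: "card (X \<union> V1) \<le> Suc (fst (dico_eval t2)) + card V1" if "X \<in> set Xs2" for X
    using card_Un_le[of X V1] x2(2) that by fastforce
  have val: "Suc (fst (dico_eval (Series t1 t2))) =
      min (Suc (fst (dico_eval t1)) + card V2) (Suc (fst (dico_eval t2)) + card V1)" using B1 B2 by simp
  show ?case
  proof (cases "Suc (fst (dico_eval t1)) + card V2 \<le> Suc (fst (dico_eval t2)) + card V1")
    case True
    have "is_dpd (V1 \<union> V2) E (map (\<lambda>X. X \<union> V2) Xs1)"
      using dpd_series[OF x1(1) series(3) e1 ES] .
    moreover have "\<forall>X\<in>set (map (\<lambda>X. X \<union> V2) Xs1). card X \<le> Suc (fst (dico_eval (Series t1 t2)))"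
      using bag1 True val by auto
    ultimately show ?thesis unfolding E_def by blast
  next
    case False
    have dj: "V2 \<inter> V1 = {}" using series(3) by blast
    have "is_dpd (V2 \<union> V1) E (map (\<lambda>X. X \<union> V1) Xs2)"
      using dpd_series[OF x2(1) dj e2] ES by blast
    then have "is_dpd (V1 \<union> V2) E (map (\<lambda>X. X \<union> V1) Xs2)" by (simp add: Un_commute)
    moreover have "\<forall>X\<in>set (map (\<lambda>X. X \<union> V1) Xs2). card X \<le> Suc (fst (dico_eval (Series t1 t2)))"
      using bag2 False val by auto
    ultimately show ?thesis unfolding E_def by blast
  qed
qed



definition lin_dec :: "'a set \<Rightarrow> ('a \<times> 'a) set \<Rightarrow> 'a list \<Rightarrow> (nat \<Rightarrow> 'a set) \<Rightarrow> bool" where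
  "lin_dec V E vs Z \<longleftrightarrow> vs \<noteq> [] \<and> distinct vs \<and> set vs = V \<and>
    (\<forall>i. Suc i < length vs \<longrightarrow> Z i \<subseteq> V \<and>
      (\<forall>u v. (u, v) \<in> E \<longrightarrow> u \<in> set (drop (Suc i) vs) \<longrightarrow> u \<notin> Z i \<longrightarrow>
         v \<in> set (drop (Suc i) vs) \<or> v \<in> Z i))"

definition gam :: "'a list \<Rightarrow> (nat \<Rightarrow> 'a set) \<Rightarrow> nat \<Rightarrow> 'a set" where
  "gam vs Z i = {vs ! i} \<union> (if 0 < i then Z (i - 1) else {}) \<union> (if Suc i < length vs then Z i else {})"

definition PE :: "nat \<Rightarrow> (nat \<times> nat) set" where
  "PE n = {(i, Suc i) | i. Suc i < n}"

lemma PE_rtrancl1: "(a, b) \<in> (PE n)\<^sup>* \<Longrightarrow> a \<le> b \<and> (a = b \<or> b < n)"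
  by (induction rule: rtrancl_induct) (auto simp: PE_def)

lemma PE_rtrancl2: "a \<le> b \<Longrightarrow> b < n \<Longrightarrow> (a, b) \<in> (PE n)\<^sup>*"
proof (induction b rule: dec_induct)
  case base then show ?case by simp
next
  case (step m)
  then have "(a, m) \<in> (PE n)\<^sup>*" by simp
  moreover have "(m, Suc m) \<in> PE n" using step PE_def by simp
  ultimately show ?case by (rule rtrancl_into_rtrancl)
qed

lemma set_drop_nth: "set (drop k xs) = {xs ! r | r. k \<le> r \<and> r < length xs}"
proof
  show "set (drop k xs) \<subseteq> {xs ! r | r. k \<le> r \<and> r < length xs}"
  proof
    fix x assume "x \<in> set (drop k xs)"
    then obtain j where "j < length (drop k xs)" "drop k xs ! j = x" by (auto simp: in_set_conv_nth)
    then show "x \<in> {xs ! r | r. k \<le> r \<and> r < length xs}" by (intro CollectI exI[of _ "k + j"]) auto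
  qed
  show "{xs ! r | r. k \<le> r \<and> r < length xs} \<subseteq> set (drop k xs)"
  proof
    fix x assume "x \<in> {xs ! r | r. k \<le> r \<and> r < length xs}"
    then obtain r where r: "k \<le> r" "r < length xs" "x = xs ! r" by blast
    then have "drop k xs ! (r - k) = x" "r - k < length (drop k xs)" by auto
    then show "x \<in> set (drop k xs)" by (metis nth_mem)
  qed
qed

lemma lin_to_dtd:
  assumes L: "lin_dec V E vs Z"
  shows "is_dtd V E {0..<length vs} (PE (length vs)) 0 (\<lambda>e. Z (fst e)) (\<lambda>i. {vs ! i})"
    and "\<And>r. r < length vs \<Longrightarrow> Gam {0..<length vs} (PE (length vs)) (\<lambda>e. Z (fst e)) (\<lambda>i. {vs ! i}) r = gam vs Z r"
proof -
  define n where "n = length vs"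
  have ne: "vs \<noteq> []" and dist: "distinct vs" and sv: "set vs = V"
    and ZV: "\<And>i. Suc i < n \<Longrightarrow> Z i \<subseteq> V"
    and cl: "\<And>i u v. Suc i < n \<Longrightarrow> (u, v) \<in> E \<Longrightarrow> u \<in> set (drop (Suc i) vs) \<Longrightarrow> u \<notin> Z i \<Longrightarrow>
         v \<in> set (drop (Suc i) vs) \<or> v \<in> Z i"
    using L unfolding lin_dec_def n_def by blast+
  have n0: "0 < n" using ne n_def by simp
  have ot: "out_tree {0..<n} (PE n) 0"
    unfolding out_tree_def
  proof (intro conjI ballI allI)
    show "finite {0..<n}" by simp
    show "0 \<in> {0..<n}" using n0 by simp
    show "PE n \<subseteq> {0..<n} \<times> {0..<n}" unfolding PE_def by auto
    show "(u, 0) \<notin> PE n" for u unfolding PE_def by auto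
    show "\<exists>!u. (u, v) \<in> PE n" if "v \<in> {0..<n} - {0}" for v
    proof
      show "(v - 1, v) \<in> PE n" using that unfolding PE_def by auto
      show "u = v - 1" if "(u, v) \<in> PE n" for u using that unfolding PE_def by auto
    qed
    show "(0, v) \<in> (PE n)\<^sup>*" if "v \<in> {0..<n}" for v using PE_rtrancl2[of 0 v n] that by simp
  qed
  have sub_set: "{r \<in> {0..<n}. (Suc i, r) \<in> (PE n)\<^sup>*} = {r. Suc i \<le> r \<and> r < n}" for i
  proof (rule set_eqI)
    fix r
    show "r \<in> {r \<in> {0..<n}. (Suc i, r) \<in> (PE n)\<^sup>*} \<longleftrightarrow> r \<in> {r. Suc i \<le> r \<and> r < n}"
      using PE_rtrancl1[of "Suc i" r n] PE_rtrancl2[of "Suc i" r n] by auto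
  qed
  have Sdrop: "(\<Union>r\<in>{r \<in> {0..<n}. (Suc i, r) \<in> (PE n)\<^sup>*}. {vs ! r}) = set (drop (Suc i) vs)" for i
  proof -
    have "(\<Union>r\<in>{r \<in> {0..<n}. (Suc i, r) \<in> (PE n)\<^sup>*}. {vs ! r}) = (\<Union>r\<in>{r. Suc i \<le> r \<and> r < n}. {vs ! r})"
      using sub_set by simp
    also have "\<dots> = set (drop (Suc i) vs)" by (auto simp: set_drop_nth n_def)
    finally show ?thesis .
  qed
  show "is_dtd V E {0..<length vs} (PE (length vs)) 0 (\<lambda>e. Z (fst e)) (\<lambda>i. {vs ! i})"
    unfolding is_dtd_def n_def[symmetric]
  proof (intro conjI ballI impI)
    show "out_tree {0..<n} (PE n) 0" by (rule ot)
    show "Z (fst e) \<subseteq> V" if ee: "e \<in> PE n" for e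
    proof -
      obtain i where "e = (i, Suc i)" "Suc i < n" using ee unfolding PE_def by blast
      then show ?thesis using ZV by simp
    qed
    show "{vs ! r} \<noteq> {}" for r by simp
    show "{vs ! r} \<subseteq> V" if "r \<in> {0..<n}" for r using that sv n_def by auto
    show "{vs ! r} \<inter> {vs ! s} = {}" if "r \<in> {0..<n}" "s \<in> {0..<n}" "r \<noteq> s" for r s
      using that dist n_def by (simp add: nth_eq_iff_index_eq)
    show "(\<Union>r\<in>{0..<n}. {vs ! r}) = V" using sv n_def by (auto simp: in_set_conv_nth) (metis atLeastLessThan_iff zero_le bexI)
    show "case e of (u, v) \<Rightarrow> z_normal V E (Z (fst (u, v))) (\<Union>r\<in>{r \<in> {0..<n}. (v, r) \<in> (PE n)\<^sup>*}. {vs ! r})"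
      if e: "e \<in> PE n" for e
    proof -
      obtain i where i: "e = (i, Suc i)" "Suc i < n" using e unfolding PE_def by blast
      have "z_normal V E (Z i) (set (drop (Suc i) vs))"
        unfolding z_normal_def
      proof
        assume "\<exists>p. walk_avoiding V E (Z i) p \<and> hd p \<in> set (drop (Suc i) vs) \<and> last p \<in> set (drop (Suc i) vs) \<and>
            (\<exists>w\<in>set p. w \<notin> Z i \<union> set (drop (Suc i) vs))"
        then obtain p w where p: "walk_avoiding V E (Z i) p" "hd p \<in> set (drop (Suc i) vs)"
          "w \<in> set p" "w \<notin> Z i \<union> set (drop (Suc i) vs)" by blast
        have "set p \<subseteq> set (drop (Suc i) vs)"
          using walk_closed[OF p(1,2)] cl[OF i(2)] by blast
        then show False using p by blast
      qed
      then show ?thesis using i Sdrop by simp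
    qed
  qed
  show "Gam {0..<length vs} (PE (length vs)) (\<lambda>e. Z (fst e)) (\<lambda>i. {vs ! i}) r = gam vs Z r" if rl: "r < length vs" for r
  proof -
    have "(\<Union>e\<in>{e \<in> PE n. fst e = r \<or> snd e = r}. Z (fst e)) =
        (if 0 < r then Z (r - 1) else {}) \<union> (if Suc r < n then Z r else {})"
    proof (rule set_eqI)
      fix x
      show "x \<in> (\<Union>e\<in>{e \<in> PE n. fst e = r \<or> snd e = r}. Z (fst e)) \<longleftrightarrow>
          x \<in> (if 0 < r then Z (r - 1) else {}) \<union> (if Suc r < n then Z r else {})"
      proof
        assume "x \<in> (\<Union>e\<in>{e \<in> PE n. fst e = r \<or> snd e = r}. Z (fst e))"
        then obtain i where "Suc i < n" "i = r \<or> Suc i = r" "x \<in> Z i" unfolding PE_def by auto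
        then show "x \<in> (if 0 < r then Z (r - 1) else {}) \<union> (if Suc r < n then Z r else {})" by auto
      next
        assume x: "x \<in> (if 0 < r then Z (r - 1) else {}) \<union> (if Suc r < n then Z r else {})"
        show "x \<in> (\<Union>e\<in>{e \<in> PE n. fst e = r \<or> snd e = r}. Z (fst e))"
        proof (cases "0 < r \<and> x \<in> Z (r - 1)")
          case True
          then have "(r - 1, r) \<in> PE n" using rl n_def unfolding PE_def by (intro CollectI exI[of _ "r - 1"]) auto
          then show ?thesis using True by force
        next
          case False
          then have "Suc r < n" "x \<in> Z r" using x by (auto split: if_splits)
          then have "(r, Suc r) \<in> PE n" unfolding PE_def by blast
          then show ?thesis using \<open>x \<in> Z r\<close> by force
        qed
      qed
    qed
    then show ?thesis unfolding Gam_def gam_def n_def by auto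
  qed
qed



lemma lin_decD:
  assumes "lin_dec V E vs Z"
  shows "vs \<noteq> []" "distinct vs" "set vs = V" "\<And>i. Suc i < length vs \<Longrightarrow> Z i \<subseteq> V"
    "\<And>i u v. Suc i < length vs \<Longrightarrow> (u, v) \<in> E \<Longrightarrow> u \<in> set (drop (Suc i) vs) \<Longrightarrow> u \<notin> Z i \<Longrightarrow>
         v \<in> set (drop (Suc i) vs) \<or> v \<in> Z i"
  using assms unfolding lin_dec_def by blast+

lemma lin_decI:
  assumes "vs \<noteq> []" "distinct vs" "set vs = V" "\<And>i. Suc i < length vs \<Longrightarrow> Z i \<subseteq> V"
    "\<And>i u v. Suc i < length vs \<Longrightarrow> (u, v) \<in> E \<Longrightarrow> u \<in> set (drop (Suc i) vs) \<Longrightarrow> u \<notin> Z i \<Longrightarrow>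
         v \<in> set (drop (Suc i) vs) \<or> v \<in> Z i"
  shows "lin_dec V E vs Z"
  using assms unfolding lin_dec_def by blast

lemma lin_leaf: "lin_dec {v} {} [v] (\<lambda>_. {})" "gam [v] (\<lambda>_. {}) 0 = {v}"
  unfolding lin_dec_def gam_def by auto

lemma lin_union:
  assumes L1: "lin_dec V1 E1 vs1 Z1" and L2: "lin_dec V2 E2 vs2 Z2" and dj: "V1 \<inter> V2 = {}"
    and ES: "E \<subseteq> (V1 \<union> V2) \<times> (V1 \<union> V2)"
    and e1: "\<And>u v. (u, v) \<in> E \<Longrightarrow> u \<in> V1 \<Longrightarrow> v \<in> V1 \<Longrightarrow> (u, v) \<in> E1"
    and e2: "\<And>u v. (u, v) \<in> E \<Longrightarrow> u \<in> V2 \<Longrightarrow> v \<in> V2 \<Longrightarrow> (u, v) \<in> E2"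
    and nb: "\<And>u v. (u, v) \<in> E \<Longrightarrow> u \<in> V2 \<Longrightarrow> v \<in> V2"
  defines "Z \<equiv> (\<lambda>i. if i < length vs1 then (if Suc i < length vs1 then Z1 i else {}) else Z2 (i - length vs1))"
  shows "lin_dec (V1 \<union> V2) E (vs1 @ vs2) Z"
    and "\<And>i. i < length (vs1 @ vs2) \<Longrightarrow> gam (vs1 @ vs2) Z i =
          (if i < length vs1 then gam vs1 Z1 i else gam vs2 Z2 (i - length vs1))"
proof -
  note a1 = lin_decD[OF L1] and a2 = lin_decD[OF L2]
  define n1 where "n1 = length vs1"
  define n2 where "n2 = length vs2"
  have n1: "0 < n1" using a1(1) n1_def by simp
  have n2: "0 < n2" using a2(1) n2_def by simp
  have len: "length (vs1 @ vs2) = n1 + n2" using n1_def n2_def by simp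
  show "lin_dec (V1 \<union> V2) E (vs1 @ vs2) Z"
  proof (rule lin_decI)
    show "vs1 @ vs2 \<noteq> []" using a1 by simp
    show "distinct (vs1 @ vs2)" using a1 a2 dj by auto
    show "set (vs1 @ vs2) = V1 \<union> V2" using a1 a2 by auto
    show "Z i \<subseteq> V1 \<union> V2" if "Suc i < length (vs1 @ vs2)" for i
    proof (cases "i < n1")
      case True then show ?thesis using a1(4)[of i] Z_def n1_def by auto
    next
      case False
      then have "Suc (i - n1) < n2" using that len by linarith
      then show ?thesis using False a2(4)[of "i - n1"] Z_def n1_def n2_def by auto
    qed
    show "v \<in> set (drop (Suc i) (vs1 @ vs2)) \<or> v \<in> Z i"
      if i: "Suc i < length (vs1 @ vs2)" and uv: "(u, v) \<in> E" and u: "u \<in> set (drop (Suc i) (vs1 @ vs2))"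
        and uZ: "u \<notin> Z i" for i u v
    proof (cases "i < n1")
      case True
      have dr: "set (drop (Suc i) (vs1 @ vs2)) = set (drop (Suc i) vs1) \<union> V2"
        using True a2(3) n1_def by auto
      have vV: "v \<in> V1 \<union> V2" using uv ES by blast
      show ?thesis
      proof (cases "u \<in> V2")
        case True
        then show ?thesis using nb[OF uv] dr by blast
      next
        case False
        then have u1: "u \<in> set (drop (Suc i) vs1)" using u dr by blast
        show ?thesis
        proof (cases "v \<in> V2")
          case True then show ?thesis using dr by blast
        next
          case False
          then have v1: "v \<in> V1" using vV by blast
          have uV1: "u \<in> V1" using u1 a1(3) in_set_dropD by fast
          have s: "Suc i < n1"
          proof (rule ccontr)
            assume "\<not> Suc i < n1"
            then have "drop (Suc i) vs1 = []" using n1_def by simp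
            then show False using u1 by simp
          qed
          have "u \<notin> Z1 i" using uZ s True Z_def n1_def by simp
          then have "v \<in> set (drop (Suc i) vs1) \<or> v \<in> Z1 i" using a1(5)[of i u v] s n1_def e1[OF uv uV1 v1] u1 by blast
          then show ?thesis using dr s True Z_def n1_def by auto
        qed
      qed
    next
      case False
      define j where "j = i - n1"
      have ij: "i = n1 + j" using False j_def by simp
      have dr: "drop (Suc i) (vs1 @ vs2) = drop (Suc j) vs2" using ij n1_def by simp
      have s: "Suc j < n2" using i len ij by simp
      have u2: "u \<in> set (drop (Suc j) vs2)" using u unfolding dr .
      have uV2: "u \<in> V2" using u2 a2(3) in_set_dropD by fast
      have v2: "v \<in> V2" using nb[OF uv uV2] .
      have "u \<notin> Z2 j" using uZ False Z_def n1_def j_def by simp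
      then have "v \<in> set (drop (Suc j) vs2) \<or> v \<in> Z2 j" using a2(5)[of j u v] s n2_def e2[OF uv uV2 v2] u2 by blast
      then show ?thesis using dr False Z_def n1_def j_def by auto
    qed
  qed
  show "gam (vs1 @ vs2) Z i = (if i < length vs1 then gam vs1 Z1 i else gam vs2 Z2 (i - length vs1))"
    if i: "i < length (vs1 @ vs2)" for i
  proof (cases "i < n1")
    case True
    have "(vs1 @ vs2) ! i = vs1 ! i" using True n1_def by (simp add: nth_append)
    moreover have "(if 0 < i then Z (i - 1) else {}) = (if 0 < i then Z1 (i - 1) else {})"
      using True Z_def n1_def by auto
    moreover have "(if Suc i < length (vs1 @ vs2) then Z i else {}) = (if Suc i < length vs1 then Z1 i else {})"
      using True Z_def n1_def n2 len by auto
    ultimately show ?thesis unfolding gam_def using True n1_def by simp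
  next
    case False
    define j where "j = i - n1"
    have ij: "i = n1 + j" using False j_def by simp
    have "(vs1 @ vs2) ! i = vs2 ! j" using ij n1_def by (simp add: nth_append)
    moreover have "(if 0 < i then Z (i - 1) else {}) = (if 0 < j then Z2 (j - 1) else {})"
    proof (cases "j = 0")
      case True then show ?thesis using ij n1 Z_def n1_def by auto
    next
      case False then show ?thesis using ij n1 Z_def n1_def by auto
    qed
    moreover have "(if Suc i < length (vs1 @ vs2) then Z i else {}) = (if Suc j < length vs2 then Z2 j else {})"
      using ij Z_def n1_def n2_def len by auto
    ultimately show ?thesis unfolding gam_def using False n1_def j_def by simp
  qed
qed

lemma lin_series:
  assumes L1: "lin_dec V1 E1 vs1 Z1" and d2: "distinct vs2" "set vs2 = V2" "vs2 \<noteq> []"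
    and dj: "V1 \<inter> V2 = {}"
    and ES: "E \<subseteq> (V1 \<union> V2) \<times> (V1 \<union> V2)"
    and e1: "\<And>u v. (u, v) \<in> E \<Longrightarrow> u \<in> V1 \<Longrightarrow> v \<in> V1 \<Longrightarrow> (u, v) \<in> E1"
  defines "Z \<equiv> (\<lambda>i. if i < length vs2 then V2 else Z1 (i - length vs2) \<union> V2)"
  shows "lin_dec (V1 \<union> V2) E (vs2 @ vs1) Z"
    and "\<And>i. i < length (vs2 @ vs1) \<Longrightarrow> i < length vs2 \<Longrightarrow> gam (vs2 @ vs1) Z i = V2"
    and "\<And>i. i < length (vs2 @ vs1) \<Longrightarrow> \<not> i < length vs2 \<Longrightarrow>
            gam (vs2 @ vs1) Z i \<subseteq> gam vs1 Z1 (i - length vs2) \<union> V2"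
proof -
  note a1 = lin_decD[OF L1]
  define n1 where "n1 = length vs1"
  define n2 where "n2 = length vs2"
  have n1: "0 < n1" using a1(1) n1_def by simp
  have n2: "0 < n2" using d2 n2_def by simp
  have len: "length (vs2 @ vs1) = n2 + n1" using n1_def n2_def by simp
  show "lin_dec (V1 \<union> V2) E (vs2 @ vs1) Z"
  proof (rule lin_decI)
    show "vs2 @ vs1 \<noteq> []" using a1 by simp
    show "distinct (vs2 @ vs1)" using a1 d2 dj by auto
    show "set (vs2 @ vs1) = V1 \<union> V2" using a1 d2 by auto
    show "Z i \<subseteq> V1 \<union> V2" if "Suc i < length (vs2 @ vs1)" for i
    proof (cases "i < n2")
      case True then show ?thesis using Z_def n2_def by auto
    next
      case False
      then have "Suc (i - n2) < n1" using that len by linarith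
      then show ?thesis using False a1(4)[of "i - n2"] Z_def n1_def n2_def by auto
    qed
    show "v \<in> set (drop (Suc i) (vs2 @ vs1)) \<or> v \<in> Z i"
      if i: "Suc i < length (vs2 @ vs1)" and uv: "(u, v) \<in> E" and u: "u \<in> set (drop (Suc i) (vs2 @ vs1))"
        and uZ: "u \<notin> Z i" for i u v
    proof (cases "i < n2")
      case True
      have dr: "V1 \<subseteq> set (drop (Suc i) (vs2 @ vs1))"
        using True a1(3) n2_def by auto
      have "v \<in> V1 \<union> V2" using uv ES by blast
      then show ?thesis using dr True Z_def n2_def by auto
    next
      case False
      define j where "j = i - n2"
      have ij: "i = n2 + j" using False j_def by simp
      have dr: "drop (Suc i) (vs2 @ vs1) = drop (Suc j) vs1" using ij n2_def by simp
      have s: "Suc j < n1" using i len ij by simp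
      have u1: "u \<in> set (drop (Suc j) vs1)" using u unfolding dr .
      have uV1: "u \<in> V1" using u1 a1(3) in_set_dropD by fast
      have uZ1: "u \<notin> Z1 j" using uZ False Z_def n2_def j_def by simp
      show ?thesis
      proof (cases "v \<in> V2")
        case True then show ?thesis using False Z_def n2_def by auto
      next
        case F2: False
        then have v1: "v \<in> V1" using uv ES by blast
        have "v \<in> set (drop (Suc j) vs1) \<or> v \<in> Z1 j" using a1(5)[of j u v] s n1_def e1[OF uv uV1 v1] u1 uZ1 by blast
        then show ?thesis using dr False Z_def n2_def j_def by auto
      qed
    qed
  qed
  show "gam (vs2 @ vs1) Z i = V2" if "i < length (vs2 @ vs1)" "i < length vs2" for i
  proof -
    have "(vs2 @ vs1) ! i = vs2 ! i" using that by (simp add: nth_append)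
    moreover have "vs2 ! i \<in> V2" using that d2 by auto
    moreover have "Suc i < length (vs2 @ vs1)" using that(2) a1(1) by (cases vs1) auto
    ultimately show ?thesis unfolding gam_def Z_def using that by auto
  qed
  show "gam (vs2 @ vs1) Z i \<subseteq> gam vs1 Z1 (i - length vs2) \<union> V2"
    if "i < length (vs2 @ vs1)" "\<not> i < length vs2" for i
  proof -
    define j where "j = i - n2"
    have ij: "i = n2 + j" using that j_def n2_def by simp
    have "(vs2 @ vs1) ! i = vs1 ! j" using ij n2_def by (simp add: nth_append)
    moreover have "(if 0 < i then Z (i - 1) else {}) \<subseteq> (if 0 < j then Z1 (j - 1) else {}) \<union> V2"
    proof (cases "j = 0")
      case True then show ?thesis using ij n2 Z_def n2_def by auto
    next
      case False then show ?thesis using ij n2 Z_def n2_def by auto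
    qed
    moreover have "(if Suc i < length (vs2 @ vs1) then Z i else {}) \<subseteq> (if Suc j < length vs1 then Z1 j else {}) \<union> V2"
      using ij Z_def n1_def n2_def len by auto
    ultimately show ?thesis unfolding gam_def using j_def n2_def by auto
  qed
qed



lemma gam_sub: "lin_dec V E vs Z \<Longrightarrow> i < length vs \<Longrightarrow> gam vs Z i \<subseteq> V"
  using lin_decD[of V E vs Z] unfolding gam_def
  by (auto split: if_splits)

lemma lin_exists:
  "is_exdico_tree t V E \<Longrightarrow> \<exists>vs Z. lin_dec V E vs Z \<and> (\<forall>i<length vs. card (gam vs Z i) \<le> Suc (fst (dico_eval t)))"
proof (induction rule: is_exdico_tree.induct)
  case (leaf v)
  then show ?case using lin_leaf[of v] by (intro exI[of _ "[v]"] exI[of _ "\<lambda>_. {}"]) auto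
next
  case (dunion t1 V1 E1 t2 V2 E2 E)
  obtain vs1 Z1 where l1: "lin_dec V1 E1 vs1 Z1" "\<forall>i<length vs1. card (gam vs1 Z1 i) \<le> Suc (fst (dico_eval t1))"
    using dunion by blast
  obtain vs2 Z2 where l2: "lin_dec V2 E2 vs2 Z2" "\<forall>i<length vs2. card (gam vs2 Z2 i) \<le> Suc (fst (dico_eval t2))"
    using dunion by blast
  have T: "is_exdico_tree (DUnion t1 t2) (V1 \<union> V2) E" using dunion by (blast intro: is_exdico_tree.dunion)
  note B = basics[OF T] and B1 = basics[OF dunion(1)] and B2 = basics[OF dunion(2)]
  have ES: "E \<subseteq> (V1 \<union> V2) \<times> (V1 \<union> V2)" using B by blast
  have e1: "(u, v) \<in> E1" if "(u, v) \<in> E" "u \<in> V1" "v \<in> V1" for u v using that dunion(3,5) B2 by blast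
  have e2: "(u, v) \<in> E2" if "(u, v) \<in> E" "u \<in> V2" "v \<in> V2" for u v using that dunion(3,5) B1 by blast
  have nb: "v \<in> V2" if "(u, v) \<in> E" "u \<in> V2" for u v using that dunion(3,5) B1 B2 by blast
  define Zu where "Zu = (\<lambda>i. if i < length vs1 then (if Suc i < length vs1 then Z1 i else {}) else Z2 (i - length vs1))"
  have U1: "lin_dec (V1 \<union> V2) E (vs1 @ vs2) Zu"
    unfolding Zu_def using l1(1) l2(1) dunion(3) ES e1 e2 nb by (rule lin_union(1))
  have U2: "gam (vs1 @ vs2) Zu i = (if i < length vs1 then gam vs1 Z1 i else gam vs2 Z2 (i - length vs1))"
    if "i < length (vs1 @ vs2)" for i
    unfolding Zu_def using l1(1) l2(1) dunion(3) ES e1 e2 nb that by (rule lin_union(2))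
  show ?case
  proof (intro exI[of _ "vs1 @ vs2"] exI[of _ Zu] conjI allI impI)
    show "lin_dec (V1 \<union> V2) E (vs1 @ vs2) Zu" by (rule U1)
    fix i assume i: "i < length (vs1 @ vs2)"
    show "card (gam (vs1 @ vs2) Zu i) \<le> Suc (fst (dico_eval (DUnion t1 t2)))"
    proof (cases "i < length vs1")
      case True then show ?thesis using U2[OF i] l1(2) by auto
    next
      case False
      then have "i - length vs1 < length vs2" using i by simp
      then show ?thesis using U2[OF i] l2(2) False by fastforce
    qed
  qed
next
  case (series t1 V1 E1 t2 V2 E2)
  obtain vs1 Z1 where l1: "lin_dec V1 E1 vs1 Z1" "\<forall>i<length vs1. card (gam vs1 Z1 i) \<le> Suc (fst (dico_eval t1))"
    using series by blast
  obtain vs2 Z2 where l2: "lin_dec V2 E2 vs2 Z2" "\<forall>i<length vs2. card (gam vs2 Z2 i) \<le> Suc (fst (dico_eval t2))"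
    using series by blast
  note B1 = basics[OF series(1)] and B2 = basics[OF series(2)]
  define E where "E = E1 \<union> E2 \<union> V1 \<times> V2 \<union> V2 \<times> V1"
  have ES: "E \<subseteq> (V1 \<union> V2) \<times> (V1 \<union> V2)" using B1 B2 E_def by blast
  have ES': "E \<subseteq> (V2 \<union> V1) \<times> (V2 \<union> V1)" using ES by blast
  have e1: "(u, v) \<in> E1" if "(u, v) \<in> E" "u \<in> V1" "v \<in> V1" for u v
    using that B2 series(3) E_def by blast
  have e2: "(u, v) \<in> E2" if "(u, v) \<in> E" "u \<in> V2" "v \<in> V2" for u v
    using that B1 series(3) E_def by blast
  have val: "Suc (fst (dico_eval (Series t1 t2))) =
      min (Suc (fst (dico_eval t1)) + card V2) (Suc (fst (dico_eval t2)) + card V1)" using B1 B2 by simp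
  note d1 = lin_decD[OF l1(1)] and d2 = lin_decD[OF l2(1)]
  have cV1: "card V1 = length vs1" using d1 distinct_card by metis
  have cV2: "card V2 = length vs2" using d2 distinct_card by metis
  show ?case
  proof (cases "Suc (fst (dico_eval t1)) + card V2 \<le> Suc (fst (dico_eval t2)) + card V1")
    case True
    define Zs where "Zs = (\<lambda>i. if i < length vs2 then V2 else Z1 (i - length vs2) \<union> V2)"
    have S1: "lin_dec (V1 \<union> V2) E (vs2 @ vs1) Zs"
      unfolding Zs_def using l1(1) d2(2,3,1) series(3) ES e1 by (rule lin_series(1))
    have S2: "gam (vs2 @ vs1) Zs i = V2" if "i < length (vs2 @ vs1)" "i < length vs2" for i
      unfolding Zs_def using l1(1) d2(2,3,1) series(3) ES e1 that by (rule lin_series(2))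
    have S3: "gam (vs2 @ vs1) Zs i \<subseteq> gam vs1 Z1 (i - length vs2) \<union> V2" if "i < length (vs2 @ vs1)" "\<not> i < length vs2" for i
      unfolding Zs_def using l1(1) d2(2,3,1) series(3) ES e1 that by (rule lin_series(3))
    show ?thesis unfolding E_def[symmetric]
    proof (intro exI[of _ "vs2 @ vs1"] exI[of _ Zs] conjI allI impI)
      show "lin_dec (V1 \<union> V2) E (vs2 @ vs1) Zs" by (rule S1)
      fix i assume i: "i < length (vs2 @ vs1)"
      show "card (gam (vs2 @ vs1) Zs i) \<le> Suc (fst (dico_eval (Series t1 t2)))"
      proof (cases "i < length vs2")
        case True2: True
        then show ?thesis using S2[OF i True2] val True by simp
      next
        case False
        then have j: "i - length vs2 < length vs1" using i by simp
        have fin: "finite (gam vs1 Z1 (i - length vs2) \<union> V2)"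
          using gam_sub[OF l1(1) j] B1 B2 finite_subset by blast
        have "card (gam (vs2 @ vs1) Zs i) \<le> card (gam vs1 Z1 (i - length vs2) \<union> V2)"
          using card_mono[OF fin S3[OF i False]] .
        also have "\<dots> \<le> card (gam vs1 Z1 (i - length vs2)) + card V2" by (rule card_Un_le)
        also have "\<dots> \<le> Suc (fst (dico_eval t1)) + card V2" using l1(2) j by simp
        finally show ?thesis using val True by simp
      qed
    qed
  next
    case False
    have dj: "V2 \<inter> V1 = {}" using series(3) by blast
    define Zs where "Zs = (\<lambda>i. if i < length vs1 then V1 else Z2 (i - length vs1) \<union> V1)"
    have S0: "lin_dec (V2 \<union> V1) E (vs1 @ vs2) Zs"
      unfolding Zs_def using l2(1) d1(2,3,1) dj ES' e2 by (rule lin_series(1))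
    have S1: "lin_dec (V1 \<union> V2) E (vs1 @ vs2) Zs" using S0 by (simp add: Un_commute)
    have S2: "gam (vs1 @ vs2) Zs i = V1" if "i < length (vs1 @ vs2)" "i < length vs1" for i
      unfolding Zs_def using l2(1) d1(2,3,1) dj ES' e2 that by (rule lin_series(2))
    have S3: "gam (vs1 @ vs2) Zs i \<subseteq> gam vs2 Z2 (i - length vs1) \<union> V1" if "i < length (vs1 @ vs2)" "\<not> i < length vs1" for i
      unfolding Zs_def using l2(1) d1(2,3,1) dj ES' e2 that by (rule lin_series(3))
    show ?thesis unfolding E_def[symmetric]
    proof (intro exI[of _ "vs1 @ vs2"] exI[of _ Zs] conjI allI impI)
      show "lin_dec (V1 \<union> V2) E (vs1 @ vs2) Zs" by (rule S1)
      fix i assume i: "i < length (vs1 @ vs2)"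
      show "card (gam (vs1 @ vs2) Zs i) \<le> Suc (fst (dico_eval (Series t1 t2)))"
      proof (cases "i < length vs1")
        case True1: True
        then show ?thesis using S2[OF i True1] val False by simp
      next
        case F1: False
        then have j: "i - length vs1 < length vs2" using i by simp
        have fin: "finite (gam vs2 Z2 (i - length vs1) \<union> V1)"
          using gam_sub[OF l2(1) j] B1 B2 finite_subset by blast
        have "card (gam (vs1 @ vs2) Zs i) \<le> card (gam vs2 Z2 (i - length vs1) \<union> V1)"
          using card_mono[OF fin S3[OF i F1]] .
        also have "\<dots> \<le> card (gam vs2 Z2 (i - length vs1)) + card V1" by (rule card_Un_le)
        also have "\<dots> \<le> Suc (fst (dico_eval t2)) + card V1" using l2(2) j by simp
        finally show ?thesis using val False by simp
      qed
    qed
  qed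
qed



lemma main_dpw: assumes T: "is_exdico_tree t V E" shows "dpw V E = fst (dico_eval t)"
proof -
  define f where "f = fst (dico_eval t)"
  obtain \<beta> where hv: "haven V E (Suc f) \<beta>" using haven_exists[OF T] f_def by blast
  have finV: "finite V" using basics[OF T] by blast
  obtain Xs where X: "is_dpd V E Xs" "\<forall>X\<in>set Xs. card X \<le> Suc f" using dpd_exists[OF T] f_def by blast
  have low: "f \<le> dpd_width Ys" if Y: "is_dpd V E Ys" for Ys
  proof -
    obtain X where "X \<in> set Ys" "Suc f \<le> card X" using dpd_lower[OF Y hv finV] by blast
    then have "Suc f \<le> Max (card ` set Ys)" by (meson List.finite_set Max_ge finite_imageI image_eqI le_trans)
    then show ?thesis unfolding dpd_width_def by simp
  qed
  have "dpd_width Xs \<le> f"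
  proof -
    have ne: "set Xs \<noteq> {}" using X(1) unfolding is_dpd_def by simp
    have "Max (card ` set Xs) \<le> Suc f" using X(2) ne by (simp add: Max_le_iff)
    then show ?thesis unfolding dpd_width_def by simp
  qed
  then have w: "dpd_width Xs = f" using low[OF X(1)] by simp
  show ?thesis unfolding dpw_def f_def[symmetric]
  proof (rule Least_equality)
    show "\<exists>Xs. is_dpd V E Xs \<and> dpd_width Xs = f" using X(1) w by blast
    show "\<And>y. \<exists>Xs. is_dpd V E Xs \<and> dpd_width Xs = y \<Longrightarrow> f \<le> y" using low by blast
  qed
qed

lemma dtd_width_Gam: "dtd_width VT ET X W = Max ((\<lambda>r. card (Gam VT ET X W r)) ` VT) - 1"
  unfolding dtd_width_def Gam_def by simp

lemma main_dtw: assumes T: "is_exdico_tree t V E" shows "dtw V E = fst (dico_eval t)"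
proof -
  define f where "f = fst (dico_eval t)"
  obtain \<beta> where hv: "haven V E (Suc f) \<beta>" using haven_exists[OF T] f_def by blast
  have finV: "finite V" using basics[OF T] by blast
  obtain vs Z where L: "lin_dec V E vs Z" "\<forall>i<length vs. card (gam vs Z i) \<le> Suc f"
    using lin_exists[OF T] f_def by blast
  note D = lin_to_dtd[OF L(1)]
  have low: "f \<le> dtd_width VT ET X W" if Y: "is_dtd V E VT ET r0 X W" for VT ET r0 X W
  proof -
    have finT: "finite VT" using Y unfolding is_dtd_def out_tree_def by blast
    obtain r where "r \<in> VT" "Suc f \<le> card (Gam VT ET X W r)" using dtd_lower[OF Y hv finV] by blast
    then have "Suc f \<le> Max ((\<lambda>r. card (Gam VT ET X W r)) ` VT)"
      using finT by (meson Max_ge finite_imageI image_eqI le_trans)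
    then show ?thesis unfolding dtd_width_Gam by simp
  qed
  have "dtd_width {0..<length vs} (PE (length vs)) (\<lambda>e. Z (fst e)) (\<lambda>i. {vs ! i}) \<le> f"
  proof -
    have ne: "{0..<length vs} \<noteq> {}" using L(1) unfolding lin_dec_def by simp
    have "Max ((\<lambda>r. card (Gam {0..<length vs} (PE (length vs)) (\<lambda>e. Z (fst e)) (\<lambda>i. {vs ! i}) r)) ` {0..<length vs}) \<le> Suc f"
      using L(2) ne D(2) by (simp add: Max_le_iff)
    then show ?thesis unfolding dtd_width_Gam by simp
  qed
  then have w: "dtd_width {0..<length vs} (PE (length vs)) (\<lambda>e. Z (fst e)) (\<lambda>i. {vs ! i}) = f"
    using low[OF D(1)] by simp
  show ?thesis unfolding dtw_def f_def[symmetric]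
  proof (rule Least_equality)
    show "\<exists>VT ET r0 X W. is_dtd V E VT ET r0 X W \<and> dtd_width VT ET X W = f" using D(1) w by blast
    show "\<And>y. \<exists>VT ET r0 X W. is_dtd V E VT ET r0 X W \<and> dtd_width VT ET X W = y \<Longrightarrow> f \<le> y" using low by blast
  qed
qed

theorem theorem5p7:
  "\<exists>c::nat. \<forall>(t :: 'a exdico_tree) V E. is_exdico_tree t V E \<longrightarrow>
      fst (dico_eval t) = dpw V E \<and> fst (dico_eval t) = dtw V E \<and>
      dico_cost t \<le> c * card V"
proof (intro exI[of _ 2] allI impI conjI)
  fix t :: "'a exdico_tree" and V E assume T: "is_exdico_tree t V E"
  show "fst (dico_eval t) = dpw V E" using main_dpw[OF T] by simp
  show "fst (dico_eval t) = dtw V E" using main_dtw[OF T] by simp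
  show "dico_cost t \<le> 2 * card V" using basics[OF T] by simp
qed


end
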